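(* The real hyperplanes in $\mathbb{P}^{n+1}$ that are evenly tangent to $\Sigma$ constitute (several) real one-dimensional families parameterized by $S^1$, and there is a natural one-to-one correspondence between the set of such $S^1$-families and the set of divisions of the $2n$ generating lines of ${\rm C}(\Lambda)$ over the points $a_1,\dots,a_{2n}$ into two sets of $n$ lines each.
   Context: Fix $n\ge2$, reals $a_1<\dots<a_{2n}$, $f(z)=\prod_{i=1}^{2n}(z-a_i)$. Let $\Lambda\subset\mathbb{P}^n$ be a rational normal curve of degree $n$ with affine coordinate $z$, ${\rm C}(\Lambda)\subset\mathbb{P}^{n+1}$ the projective cone over $\Lambda$; identifying ${\rm C}(\Lambda)$ minus its vertex with the total space of $\mathscr O_\Lambda(n)$ with fiber coordinate $v$, let $\Sigma=\{v^2=f(z)\}$, a hyperelliptic curve of genus $n-1$ and degree $2n$ not through the vertex. The real structure on $\mathbb{P}^{n+1}$ is the one inducing $(v,z)\mapsto((-1)^n\bar v,\bar z)$ on the cone (complex conjugation on $\Lambda$). A hyperplane $h\subset\mathbb{P}^{n+1}$ is evenly tangent to $\Sigma$ if $h$ is tangent to $\Sigma$ at every intersection point and the contact order is even at each of them. *)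

theory Defs
  imports "HOL-Complex_Analysis.Complex_Analysis" "HOL-Computational_Algebra.Polynomial"
begin

text \<open>Coordinates on P^(n+1): (x_0,...,x_n, y); the cone C(Lambda) is the set of points
  (s^n, s^(n-1) t, ..., t^n, y).  A hyperplane is given (up to a nonzero scalar) by a
  linear form  sum_k h k * x_k + c * y, represented by the pair (h, c), with h k = 0 for k > n.\<close>

type_synonym hyp = "(nat \<Rightarrow> complex) \<times> complex"

definition is_hyp :: "nat \<Rightarrow> hyp \<Rightarrow> bool" where
  "is_hyp n H \<longleftrightarrow> (\<forall>k>n. fst H k = 0) \<and> ((\<exists>k\<le>n. fst H k \<noteq> 0) \<or> snd H \<noteq> 0)"

definition proj_eq :: "hyp \<Rightarrow> hyp \<Rightarrow> bool" where
  "proj_eq H H' \<longleftrightarrow> (\<exists>l::complex. l \<noteq> 0 \<and> fst H' = (\<lambda>k. l * fst H k) \<and> snd H' = l * snd H)"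

text \<open>Real structure: x_k \<mapsto> conj x_k, y \<mapsto> (-1)^n conj y (this induces
  (v,z) \<mapsto> ((-1)^n conj v, conj z) on the cone).  A hyperplane is real iff it is
  invariant, i.e. its conjugated equation is proportional to the original one.\<close>
definition real_hyp :: "nat \<Rightarrow> hyp \<Rightarrow> bool" where
  "real_hyp n H \<longleftrightarrow> (\<exists>l::complex. l \<noteq> 0 \<and> (\<forall>k. cnj (fst H k) = l * fst H k)
                                  \<and> (-1)^n * cnj (snd H) = l * snd H)"

text \<open>Sigma in the affine chart s = 1 (z = t/s, v = y): v^2 = f(z).\<close>
definition SigmaA :: "nat \<Rightarrow> (nat \<Rightarrow> real) \<Rightarrow> complex \<Rightarrow> complex \<Rightarrow> complex" where
  "SigmaA n a z v = v^2 - (\<Prod>i\<in>{1..2*n}. (z - complex_of_real (a i)))"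

text \<open>Sigma in the chart t = 1 (w = s/t = 1/z, u = y = v/z^n): u^2 = prod (1 - a_i w).
  Its points at infinity are w = 0, u = +-1.\<close>
definition SigmaB :: "nat \<Rightarrow> (nat \<Rightarrow> real) \<Rightarrow> complex \<Rightarrow> complex \<Rightarrow> complex" where
  "SigmaB n a w u = u^2 - (\<Prod>i\<in>{1..2*n}. (1 - complex_of_real (a i) * w))"

definition LA :: "nat \<Rightarrow> hyp \<Rightarrow> complex \<Rightarrow> complex \<Rightarrow> complex" where
  "LA n H z v = (\<Sum>k\<le>n. fst H k * z^k) + snd H * v"

definition LB :: "nat \<Rightarrow> hyp \<Rightarrow> complex \<Rightarrow> complex \<Rightarrow> complex" where
  "LB n H w u = (\<Sum>k\<le>n. fst H k * w^(n-k)) + snd H * u"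

definition local_param ::
  "(complex \<Rightarrow> complex \<Rightarrow> complex) \<Rightarrow> complex \<times> complex \<Rightarrow>
   (complex \<Rightarrow> complex) \<Rightarrow> (complex \<Rightarrow> complex) \<Rightarrow> real \<Rightarrow> bool" where
  "local_param Phi P g1 g2 r \<longleftrightarrow>
     r > 0 \<and> g1 holomorphic_on ball 0 r \<and> g2 holomorphic_on ball 0 r \<and>
     (g1 0, g2 0) = P \<and> (\<forall>t\<in>ball 0 r. Phi (g1 t) (g2 t) = 0) \<and>
     (deriv g1 0 \<noteq> 0 \<or> deriv g2 0 \<noteq> 0)"

definition contact_order ::
  "(complex \<Rightarrow> complex \<Rightarrow> complex) \<Rightarrow> (complex \<Rightarrow> complex \<Rightarrow> complex) \<Rightarrow>
   complex \<times> complex \<Rightarrow> nat \<Rightarrow> bool" where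
  "contact_order Phi L P k \<longleftrightarrow>
     (\<exists>g1 g2 r g. local_param Phi P g1 g2 r \<and> g holomorphic_on ball 0 r \<and> g 0 \<noteq> 0 \<and>
        (\<forall>t\<in>ball 0 r. L (g1 t) (g2 t) = t^k * g t))"

definition evenly_tangent :: "nat \<Rightarrow> (nat \<Rightarrow> real) \<Rightarrow> hyp \<Rightarrow> bool" where
  "evenly_tangent n a H \<longleftrightarrow>
     (\<forall>z v. SigmaA n a z v = 0 \<and> LA n H z v = 0 \<longrightarrow>
        (\<exists>k. k \<ge> 2 \<and> even k \<and> contact_order (SigmaA n a) (LA n H) (z, v) k)) \<and>
     (\<forall>u. SigmaB n a 0 u = 0 \<and> LB n H 0 u = 0 \<longrightarrow>
        (\<exists>k. k \<ge> 2 \<and> even k \<and> contact_order (SigmaB n a) (LB n H) (0, u) k))"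

definition divisions :: "nat \<Rightarrow> nat set set set" where
  "divisions n = {{S, {1..2*n} - S} | S. S \<subseteq> {1..2*n} \<and> card S = n}"

text \<open>The hyperplane through the vertex spanned by the generating lines over a_i, i in S:
  its equation is prod_{i in S} (z - a_i) = 0.\<close>
definition vertex_hyp :: "nat \<Rightarrow> (nat \<Rightarrow> real) \<Rightarrow> nat set \<Rightarrow> hyp" where
  "vertex_hyp n a S = ((\<lambda>k. coeff (\<Prod>i\<in>S. [:- complex_of_real (a i), 1:]) k), 0)"

end

theory Submission
  imports Defs "HOL-Computational_Algebra.Fundamental_Theorem_Algebra"
begin



lemma order_unique_aux:
  fixes g h :: "complex \<Rightarrow> complex"
  assumes r: "r > 0" and hg: "g holomorphic_on ball 0 r" and hh: "h holomorphic_on ball 0 r"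
    and g0: "g 0 \<noteq> 0" and mk: "m < k"
    and eq: "\<And>t. t \<in> ball 0 r \<Longrightarrow> t^m * g t = t^k * h t"
  shows False
proof -
  have o: "0 \<in> interior (ball (0::complex) r)" using r by simp
  have cg: "isCont g 0"
    using continuous_on_interior[OF holomorphic_on_imp_continuous_on[OF hg] o] .
  have hh2: "(\<lambda>t. t^(k-m) * h t) holomorphic_on ball 0 r"
    by (intro holomorphic_intros hh)
  have ch: "isCont (\<lambda>t. t^(k-m) * h t) 0"
    using continuous_on_interior[OF holomorphic_on_imp_continuous_on[OF hh2] o] .
  have e: "\<forall>\<^sub>F t in at 0. g t = t^(k-m) * h t"
  proof (rule eventually_mono[OF eventually_at_in_open[of "ball 0 r" 0]])
    show "open (ball (0::complex) r)" by simp
    show "(0::complex) \<in> ball 0 r" using r by simp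
    fix t :: complex assume t: "t \<in> ball 0 r - {0}"
    from eq[of t] t have "t^m * g t = t^m * (t^(k-m) * h t)"
      using mk by (simp add: power_add[symmetric])
    then show "g t = t^(k-m) * h t" using t by simp
  qed
  have l1: "(g \<longlongrightarrow> g 0) (at 0)" using cg isCont_def by blast
  have l2: "((\<lambda>t. t^(k-m) * h t) \<longlongrightarrow> 0^(k-m) * h 0) (at 0)" using ch isCont_def by blast
  have l3: "(g \<longlongrightarrow> 0^(k-m) * h 0) (at 0)"
    using tendsto_cong[OF e] l2 by blast
  have "g 0 = 0^(k-m) * h 0" using tendsto_unique[OF _ l1 l3] by simp
  then show False using g0 mk by simp
qed

lemma order_unique_hol:
  fixes g h :: "complex \<Rightarrow> complex"
  assumes r: "r > 0" and hg: "g holomorphic_on ball 0 r" and hh: "h holomorphic_on ball 0 r"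
    and g0: "g 0 \<noteq> 0" and h0: "h 0 \<noteq> 0"
    and eq: "\<And>t. t \<in> ball 0 r \<Longrightarrow> t^m * g t = t^k * h t"
  shows "m = k"
proof (rule ccontr)
  assume "m \<noteq> k"
  then consider "m < k" | "k < m" by linarith
  then show False
  proof cases
    case 1 then show ?thesis using order_unique_aux[OF r hg hh g0 1 eq] by blast
  next
    case 2
    have "\<And>t. t \<in> ball 0 r \<Longrightarrow> t^k * h t = t^m * g t" using eq by simp
    from order_unique_aux[OF r hh hg h0 2 this] show ?thesis .
  qed
qed

lemma divide_zero_hol:
  fixes g :: "complex \<Rightarrow> complex"
  assumes r: "r > 0" and hg: "g holomorphic_on ball 0 r"
  obtains \<rho> where "\<rho> holomorphic_on ball 0 r" "\<rho> 0 = deriv g 0"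
    "\<And>t. t \<in> ball 0 r \<Longrightarrow> g t - g 0 = t * \<rho> t"
proof -
  define \<rho> where "\<rho> = (\<lambda>z. if z = 0 then deriv g 0 else (g z - g 0) / (z - 0))"
  have "\<rho> holomorphic_on ball 0 r" unfolding \<rho>_def
    by (rule pole_lemma[OF hg]) (use r in simp)
  moreover have "\<rho> 0 = deriv g 0" by (simp add: \<rho>_def)
  moreover have "g t - g 0 = t * \<rho> t" for t by (simp add: \<rho>_def)
  ultimately show ?thesis using that by blast
qed




lemma cont_small_ball:
  fixes f :: "complex \<Rightarrow> complex"
  assumes "isCont f 0" "e > 0"
  obtains d where "d > 0" "\<And>t. t \<in> ball 0 d \<Longrightarrow> dist (f t) (f 0) < e"
proof -
  from assms obtain d where "d > 0" "\<And>t. dist t 0 < d \<Longrightarrow> dist (f t) (f 0) < e"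
    unfolding continuous_at_eps_delta by blast
  then show ?thesis using that by (simp add: dist_commute)
qed

lemma poly_comp_order:
  fixes p :: "complex poly" and g :: "complex \<Rightarrow> complex"
  assumes r: "r > 0" and hg: "g holomorphic_on ball 0 r" and g0: "g 0 = z0"
    and dg: "deriv g 0 \<noteq> 0" and p: "p \<noteq> 0"
  obtains s where "s holomorphic_on ball 0 r" "s 0 \<noteq> 0"
    "\<And>t. t \<in> ball 0 r \<Longrightarrow> poly p (g t) = t^(order z0 p) * s t"
proof -
  define m where "m = order z0 p"
  obtain q where pq: "p = [:-z0, 1:] ^ m * q" and nd: "\<not> [:-z0, 1:] dvd q"
    using order_decomp[OF p] unfolding m_def by blast
  have q0: "poly q z0 \<noteq> 0" using nd poly_eq_0_iff_dvd by blast
  obtain \<rho> where h\<rho>: "\<rho> holomorphic_on ball 0 r" and \<rho>0: "\<rho> 0 = deriv g 0"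
    and \<rho>e: "\<And>t. t \<in> ball 0 r \<Longrightarrow> g t - g 0 = t * \<rho> t"
    using divide_zero_hol[OF r hg] by blast
  define s where "s = (\<lambda>t. \<rho> t ^ m * poly q (g t))"
  have "s holomorphic_on ball 0 r" unfolding s_def by (intro holomorphic_intros h\<rho> hg)
  moreover have "s 0 \<noteq> 0" using q0 dg \<rho>0 g0 by (simp add: s_def)
  moreover have "poly p (g t) = t^m * s t" if "t \<in> ball 0 r" for t
  proof -
    have "poly p (g t) = (g t - z0)^m * poly q (g t)" by (simp add: pq poly_power)
    also have "g t - z0 = t * \<rho> t" using \<rho>e[OF that] g0 by simp
    finally show ?thesis by (simp add: s_def power_mult_distrib)
  qed
  ultimately show ?thesis using that unfolding m_def by blast
qed

lemma nonpos_Reals_dist1: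
  fixes z :: complex
  assumes "cmod (z - 1) < 1" shows "z \<notin> \<real>\<^sub>\<le>\<^sub>0"
proof
  assume "z \<in> \<real>\<^sub>\<le>\<^sub>0"
  then have "Re z \<le> 0" by (simp add: complex_nonpos_Reals_iff)
  moreover have "\<bar>Re (z - 1)\<bar> \<le> cmod (z - 1)" by (rule abs_Re_le_cmod)
  ultimately show False using assms by simp
qed

lemma nonbranch_contact:
  fixes \<phi> p q :: "complex poly" and c e z0 v0 :: complex
  assumes c: "c \<noteq> 0" and e: "e \<noteq> 0" and q: "q \<noteq> 0"
    and iden: "\<And>z. poly p z ^ 2 - c^2 * poly \<phi> z = e * poly q z ^ 2"
    and v0: "v0 \<noteq> 0" and v0e: "v0^2 = poly \<phi> z0" and L0: "poly p z0 + c * v0 = 0"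
  shows "contact_order (\<lambda>z v. v^2 - poly \<phi> z) (\<lambda>z v. poly p z + c * v) (z0, v0) (2 * order z0 q)"
    and "order z0 q \<ge> 1"
proof -
  have "e * poly q z0 ^ 2 = (poly p z0 - c * v0) * (poly p z0 + c * v0)"
    using iden[of z0] v0e by (simp add: algebra_simps power2_eq_square)
  then have "poly q z0 = 0" using L0 e by simp
  then show "order z0 q \<ge> 1" using q order_root by (metis less_one not_less)
next
  define \<psi> where "\<psi> = (\<lambda>t. poly \<phi> (z0 + t) / v0^2)"
  have c\<psi>: "isCont \<psi> 0" unfolding \<psi>_def by (intro continuous_intros) (use v0 in simp)
  have \<psi>0: "\<psi> 0 = 1" using v0 by (simp add: \<psi>_def v0e[symmetric])
  obtain r1 where r1: "r1 > 0" and r1b: "\<And>t. t \<in> ball 0 r1 \<Longrightarrow> dist (\<psi> t) (\<psi> 0) < 1"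
    using cont_small_ball[OF c\<psi>, of 1] by auto
  have \<psi>nr: "\<psi> t \<notin> \<real>\<^sub>\<le>\<^sub>0" if "t \<in> ball 0 r1" for t
    using r1b[OF that] \<psi>0 nonpos_Reals_dist1 by (simp add: dist_norm)
  define g2 where "g2 = (\<lambda>t. v0 * csqrt (\<psi> t))"
  have hg2: "g2 holomorphic_on ball 0 r1" unfolding g2_def
    by (intro holomorphic_intros holomorphic_on_csqrt') (use \<psi>nr v0 in \<open>auto simp: \<psi>_def intro!: holomorphic_intros\<close>)
  have g20: "g2 0 = v0" by (simp add: g2_def \<psi>0)
  have g2sq: "g2 t ^ 2 = poly \<phi> (z0 + t)" for t
    using v0 by (simp add: g2_def power_mult_distrib \<psi>_def)
  define L' where "L' = (\<lambda>t. poly p (z0 + t) - c * g2 t)"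
  have hL': "L' holomorphic_on ball 0 r1" unfolding L'_def by (intro holomorphic_intros hg2)
  have cL': "isCont L' 0"
    using continuous_on_interior[OF holomorphic_on_imp_continuous_on[OF hL'], of 0] r1 by simp
  have L'0: "L' 0 \<noteq> 0"
  proof -
    have "poly p z0 = - (c * v0)" using L0 by (simp add: eq_neg_iff_add_eq_0)
    then have "L' 0 = - 2 * c * v0" using g20 by (simp add: L'_def algebra_simps)
    then show ?thesis using c v0 by simp
  qed
  obtain d where d: "d > 0" and db: "\<And>t. t \<in> ball 0 d \<Longrightarrow> dist (L' t) (L' 0) < cmod (L' 0)"
    using cont_small_ball[OF cL', of "cmod (L' 0)"] L'0 by auto
  define r2 where "r2 = min r1 d"
  have r2: "r2 > 0" using r1 d by (simp add: r2_def)
  have sub: "ball 0 r2 \<subseteq> ball 0 r1" by (rule subset_ball) (simp add: r2_def)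
  have L'nz: "L' t \<noteq> 0" if "t \<in> ball 0 r2" for t
  proof
    assume "L' t = 0"
    moreover have "t \<in> ball 0 d" using that by (simp add: r2_def)
    ultimately show False using db[of t] by (simp add: dist_norm)
  qed
  have hg1: "(\<lambda>t. z0 + t) holomorphic_on ball 0 r2" by (intro holomorphic_intros)
  have dg1: "deriv (\<lambda>t. z0 + t) 0 = 1"
    by (rule DERIV_imp_deriv) (auto intro!: derivative_eq_intros)
  obtain s where hs: "s holomorphic_on ball 0 r2" and s0: "s 0 \<noteq> 0"
    and se: "\<And>t. t \<in> ball 0 r2 \<Longrightarrow> poly q (z0 + t) = t^(order z0 q) * s t"
    using poly_comp_order[OF r2 hg1 _ _ q, of z0] dg1 by auto
  define m where "m = order z0 q"
  define g where "g = (\<lambda>t. e * s t ^ 2 / L' t)"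
  have hg: "g holomorphic_on ball 0 r2" unfolding g_def
    by (intro holomorphic_intros hs holomorphic_on_subset[OF hL' sub]) (use L'nz in auto)
  have g0: "g 0 \<noteq> 0" using e s0 L'0 by (simp add: g_def)
  have Le: "poly p (z0 + t) + c * g2 t = t^(2*m) * g t" if "t \<in> ball 0 r2" for t
  proof -
    have "(poly p (z0 + t) + c * g2 t) * L' t = poly p (z0 + t) ^ 2 - c^2 * g2 t ^ 2"
      by (simp add: L'_def algebra_simps power2_eq_square)
    also have "\<dots> = e * poly q (z0 + t) ^ 2" using iden[of "z0 + t"] g2sq[of t] by simp
    also have "\<dots> = e * (t^m * s t)^2" using se[OF that] by (simp add: m_def)
    finally have "(poly p (z0 + t) + c * g2 t) * L' t = e * (t^m * s t)^2" .
    then show ?thesis using L'nz[OF that]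
      by (simp add: g_def field_simps power_mult_distrib power_mult)
  qed
  show "contact_order (\<lambda>z v. v^2 - poly \<phi> z) (\<lambda>z v. poly p z + c * v) (z0, v0) (2 * order z0 q)"
    unfolding contact_order_def local_param_def
    apply (rule exI[of _ "\<lambda>t. z0 + t"], rule exI[of _ g2], rule exI[of _ r2], rule exI[of _ g])
    using r2 hg1 holomorphic_on_subset[OF hg2 sub] g20 g2sq dg1 hg g0 Le
    by (auto simp: m_def)
qed




lemma branch_contact:
  fixes \<phi> u p w :: "complex poly" and a0 c :: complex
  assumes \<phi>: "\<phi> = [:-a0, 1:] * u" and u0: "poly u a0 \<noteq> 0"
    and p: "p = [:-a0, 1:] * w" and w0: "poly w a0 \<noteq> 0" and c: "c = 0"
  shows "contact_order (\<lambda>z v. v^2 - poly \<phi> z) (\<lambda>z v. poly p z + c * v) (a0, 0) 2"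
proof -
  define Xf where "Xf = poly \<phi>"
  have hXf: "Xf holomorphic_on UNIV" unfolding Xf_def
    using poly_holomorphic_on[OF holomorphic_on_id, of \<phi> UNIV] by (simp add: id_def)
  have dXf: "deriv Xf a0 = poly u a0"
  proof -
    have "deriv Xf a0 = poly (pderiv \<phi>) a0" unfolding Xf_def
      by (rule DERIV_imp_deriv) (rule poly_DERIV)
    also have "pderiv \<phi> = [:-a0, 1:] * pderiv u + u * pderiv [:-a0, 1:]"
      by (simp only: \<phi> pderiv_mult)
    also have "pderiv [:-a0, 1:] = [:1:]" by (simp add: pderiv_pCons)
    also have "poly ([:-a0, 1:] * pderiv u + u * [:1:]) a0 = poly u a0" by simp
    finally show ?thesis .
  qed
  have Xfa0: "Xf a0 = 0" by (simp add: Xf_def \<phi>)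
  obtain \<rho>0 where \<rho>0: "\<rho>0 > 0" and inj: "inj_on Xf (ball a0 \<rho>0)"
    using has_complex_derivative_locally_injective[OF hXf, of a0] dXf u0 by auto
  define B where "B = ball a0 \<rho>0"
  have hB: "Xf holomorphic_on B" using hXf holomorphic_on_subset by blast
  obtain \<psi> where h\<psi>: "\<psi> holomorphic_on (Xf ` B)"
    and d\<psi>: "\<And>z. z \<in> B \<Longrightarrow> deriv Xf z * deriv \<psi> (Xf z) = 1"
    and \<psi>Xf: "\<And>z. z \<in> B \<Longrightarrow> \<psi> (Xf z) = z"
    using holomorphic_has_inverse[OF hB _ inj[folded B_def]] by (auto simp: B_def)
  have oB: "open (Xf ` B)" using open_mapping_thm3[OF hB _ inj[folded B_def]] by (simp add: B_def)
  have a0B: "a0 \<in> B" using \<rho>0 by (simp add: B_def)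
  have "0 \<in> Xf ` B" using a0B Xfa0 by force
  then obtain r' where r': "r' > 0" and r'B: "ball 0 r' \<subseteq> Xf ` B"
    using oB open_contains_ball by blast
  have h\<psi>': "\<psi> holomorphic_on ball 0 r'" using holomorphic_on_subset[OF h\<psi> r'B] .
  obtain \<rho> where h\<rho>: "\<rho> holomorphic_on ball 0 r'" and \<rho>0e: "\<rho> 0 = deriv \<psi> 0"
    and \<rho>e: "\<And>s. s \<in> ball 0 r' \<Longrightarrow> \<psi> s - \<psi> 0 = s * \<rho> s"
    using divide_zero_hol[OF r' h\<psi>'] by blast
  have \<psi>0: "\<psi> 0 = a0" using \<psi>Xf[OF a0B] Xfa0 by simp
  have d\<psi>0: "deriv \<psi> 0 \<noteq> 0" using d\<psi>[OF a0B] Xfa0 by auto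
  define r where "r = min 1 r'"
  have r: "r > 0" using r' by (simp add: r_def)
  have sq: "t^2 \<in> ball 0 r'" if "t \<in> ball 0 r" for t :: complex
  proof -
    have n1: "norm t < 1" "norm t < r'" using that by (auto simp: r_def)
    have "norm (t^2) = norm t * norm t" by (simp add: norm_mult power2_eq_square)
    also have "\<dots> \<le> norm t" using n1 by (simp add: mult_left_le_one_le)
    finally show ?thesis using n1 by simp
  qed
  have sqimg: "(\<lambda>t::complex. t^2) ` ball 0 r \<subseteq> ball 0 r'" using sq by blast
  define g1 where "g1 = (\<lambda>t. \<psi> (t^2))"
  have hg1: "g1 holomorphic_on ball 0 r"
    using holomorphic_on_compose_gen[OF _ h\<psi>' sqimg, of] unfolding g1_def o_def
    by (simp add: holomorphic_intros)
  define g where "g = (\<lambda>t. \<rho> (t^2) * poly w (g1 t))"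
  have hg\<rho>: "(\<lambda>t. \<rho> (t^2)) holomorphic_on ball 0 r"
    using holomorphic_on_compose_gen[OF _ h\<rho> sqimg] unfolding o_def
    by (simp add: holomorphic_intros)
  have hg: "g holomorphic_on ball 0 r" unfolding g_def
    by (intro holomorphic_intros hg\<rho> hg1)
  have g0: "g 0 \<noteq> 0" using \<rho>0e d\<psi>0 w0 \<psi>0 by (simp add: g_def g1_def)
  have phi0: "t^2 - poly \<phi> (g1 t) = 0" if tb: "t \<in> ball 0 r" for t
  proof -
    obtain z where z: "z \<in> B" "t^2 = Xf z" using r'B sq[OF tb] by blast
    have "\<psi> (Xf z) = z" using \<psi>Xf[OF z(1)] .
    then show ?thesis using z(2) by (simp add: g1_def Xf_def)
  qed
  have Le: "poly p (g1 t) + c * t = t^2 * g t" if "t \<in> ball 0 r" for t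
  proof -
    have "g1 t - a0 = t^2 * \<rho> (t^2)" using \<rho>e[OF sq[OF that]] \<psi>0 by (simp add: g1_def)
    then show ?thesis by (simp add: p c g_def algebra_simps)
  qed
  show ?thesis
    unfolding contact_order_def local_param_def
    apply (rule exI[of _ g1], rule exI[of _ "\<lambda>t. t"], rule exI[of _ r], rule exI[of _ g])
    using r hg1 hg g0 phi0 Le \<psi>0 by (auto simp: g1_def)
qed




lemma no_tangent_branch:
  fixes \<phi> p :: "complex poly" and c a0 :: complex
  assumes c: "c \<noteq> 0" and \<phi>0: "poly \<phi> a0 = 0" and d\<phi>: "poly (pderiv \<phi>) a0 \<noteq> 0"
    and co: "contact_order (\<lambda>z v. v^2 - poly \<phi> z) (\<lambda>z v. poly p z + c * v) (a0, 0) k"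
    and k: "k \<ge> 2"
  shows False
proof -
  obtain g1 g2 r g where r: "r > 0" and hg1: "g1 holomorphic_on ball 0 r"
    and hg2: "g2 holomorphic_on ball 0 r" and init: "g1 0 = a0" "g2 0 = 0"
    and on: "\<And>t. t \<in> ball 0 r \<Longrightarrow> g2 t ^ 2 - poly \<phi> (g1 t) = 0"
    and nd: "deriv g1 0 \<noteq> 0 \<or> deriv g2 0 \<noteq> 0"
    and hg: "g holomorphic_on ball 0 r" and g0: "g 0 \<noteq> 0"
    and eq: "\<And>t. t \<in> ball 0 r \<Longrightarrow> poly p (g1 t) + c * g2 t = t^k * g t"
    using co unfolding contact_order_def local_param_def by auto
  have ob: "open (ball (0::complex) r)" "(0::complex) \<in> ball 0 r" using r by auto
  define D1 where "D1 = deriv g1 0"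
  define D2 where "D2 = deriv g2 0"
  have d1: "(g1 has_field_derivative D1) (at 0)" unfolding D1_def
    using holomorphic_derivI[OF hg1 ob] .
  have d2: "(g2 has_field_derivative D2) (at 0)" unfolding D2_def
    using holomorphic_derivI[OF hg2 ob] .
  have dg: "(g has_field_derivative deriv g 0) (at 0)"
    using holomorphic_derivI[OF hg ob] .
  have dE: "((\<lambda>t. g2 t ^ 2 - poly \<phi> (g1 t)) has_field_derivative
      (2 * g2 0 * D2 - poly (pderiv \<phi>) (g1 0) * D1)) (at 0)"
    using DERIV_chain2[OF poly_DERIV d1, of \<phi>] d1 d2
    by (auto intro!: derivative_eq_intros)
  have dE0: "((\<lambda>t. g2 t ^ 2 - poly \<phi> (g1 t)) has_field_derivative 0) (at 0)"
    by (rule has_field_derivative_transform_within_open[OF DERIV_const ob]) (use on in auto)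
  have "2 * g2 0 * D2 - poly (pderiv \<phi>) (g1 0) * D1 = 0" using DERIV_unique[OF dE dE0] .
  then have D10: "D1 = 0" using init d\<phi> by simp
  then have D20: "D2 \<noteq> 0" using nd by (simp add: D1_def D2_def)
  have dL: "((\<lambda>t. poly p (g1 t) + c * g2 t) has_field_derivative
      (poly (pderiv p) (g1 0) * D1 + c * D2)) (at 0)"
    using DERIV_chain2[OF poly_DERIV d1, of p] d1 d2
    by (auto intro!: derivative_eq_intros)
  have dR: "((\<lambda>t. t^k * g t) has_field_derivative
      (of_nat k * 0^(k-1) * 1 * g 0 + 0^k * deriv g 0)) (at 0)"
    using dg by (auto intro!: derivative_eq_intros)
  have dR': "((\<lambda>t. poly p (g1 t) + c * g2 t) has_field_derivative
      (of_nat k * 0^(k-1) * 1 * g 0 + 0^k * deriv g 0)) (at 0)"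
    by (rule has_field_derivative_transform_within_open[OF dR ob]) (use eq in auto)
  have "poly (pderiv p) (g1 0) * D1 + c * D2 = of_nat k * 0^(k-1) * 1 * g 0 + 0^k * deriv g 0"
    using DERIV_unique[OF dL dR'] .
  moreover have "(0::complex)^(k-1) = 0" "(0::complex)^k = 0" using k by auto
  ultimately have "c * D2 = 0" using D10 by simp
  then show False using c D20 by simp
qed

lemma contact_order_eq_order:
  fixes \<phi> p R :: "complex poly" and c z0 v0 :: complex
  assumes c: "c \<noteq> 0" and v0: "v0 \<noteq> 0" and v0e: "v0^2 = poly \<phi> z0"
    and L0: "poly p z0 + c * v0 = 0"
    and co: "contact_order (\<lambda>z v. v^2 - poly \<phi> z) (\<lambda>z v. poly p z + c * v) (z0, v0) k"
    and R: "R = p^2 - smult (c^2) \<phi>" and R0: "R \<noteq> 0"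
  shows "order z0 R = k"
proof -
  obtain g1 g2 r g where r: "r > 0" and hg1: "g1 holomorphic_on ball 0 r"
    and hg2: "g2 holomorphic_on ball 0 r" and init: "g1 0 = z0" "g2 0 = v0"
    and on: "\<And>t. t \<in> ball 0 r \<Longrightarrow> g2 t ^ 2 - poly \<phi> (g1 t) = 0"
    and nd: "deriv g1 0 \<noteq> 0 \<or> deriv g2 0 \<noteq> 0"
    and hg: "g holomorphic_on ball 0 r" and g0: "g 0 \<noteq> 0"
    and eq: "\<And>t. t \<in> ball 0 r \<Longrightarrow> poly p (g1 t) + c * g2 t = t^k * g t"
    using co unfolding contact_order_def local_param_def by auto
  have ob: "open (ball (0::complex) r)" "(0::complex) \<in> ball 0 r" using r by auto
  define D1 where "D1 = deriv g1 0"
  define D2 where "D2 = deriv g2 0"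
  have d1: "(g1 has_field_derivative D1) (at 0)" unfolding D1_def
    using holomorphic_derivI[OF hg1 ob] .
  have d2: "(g2 has_field_derivative D2) (at 0)" unfolding D2_def
    using holomorphic_derivI[OF hg2 ob] .
  have dE: "((\<lambda>t. g2 t ^ 2 - poly \<phi> (g1 t)) has_field_derivative
      (2 * g2 0 * D2 - poly (pderiv \<phi>) (g1 0) * D1)) (at 0)"
    using DERIV_chain2[OF poly_DERIV d1, of \<phi>] d1 d2
    by (auto intro!: derivative_eq_intros)
  have dE0: "((\<lambda>t. g2 t ^ 2 - poly \<phi> (g1 t)) has_field_derivative 0) (at 0)"
    by (rule has_field_derivative_transform_within_open[OF DERIV_const ob]) (use on in auto)
  have "2 * g2 0 * D2 - poly (pderiv \<phi>) (g1 0) * D1 = 0" using DERIV_unique[OF dE dE0] .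
  then have D1nz: "D1 \<noteq> 0" using init v0 nd by (auto simp: D1_def D2_def)
  obtain s where hs: "s holomorphic_on ball 0 r" and s0: "s 0 \<noteq> 0"
    and se: "\<And>t. t \<in> ball 0 r \<Longrightarrow> poly R (g1 t) = t^(order z0 R) * s t"
    using poly_comp_order[OF r hg1 init(1) _ R0] D1nz by (auto simp: D1_def)
  define L' where "L' = (\<lambda>t. poly p (g1 t) - c * g2 t)"
  define h where "h = (\<lambda>t. g t * L' t)"
  have hh: "h holomorphic_on ball 0 r" unfolding h_def L'_def
    by (intro holomorphic_intros hg hg1 hg2)
  have "poly p z0 = - (c * v0)" using L0 by (simp add: eq_neg_iff_add_eq_0)
  then have "L' 0 = - 2 * c * v0" using init by (simp add: L'_def algebra_simps)
  then have h0: "h 0 \<noteq> 0" using c v0 g0 by (simp add: h_def)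
  have "t^(order z0 R) * s t = t^k * h t" if t: "t \<in> ball 0 r" for t
  proof -
    have "poly R (g1 t) = poly p (g1 t) ^ 2 - c^2 * poly \<phi> (g1 t)" by (simp add: R)
    also have "poly \<phi> (g1 t) = g2 t ^ 2" using on[OF t] by simp
    also have "poly p (g1 t) ^ 2 - c^2 * g2 t ^ 2 = (poly p (g1 t) + c * g2 t) * L' t"
      by (simp add: L'_def algebra_simps power2_eq_square)
    also have "\<dots> = t^k * h t" using eq[OF t] by (simp add: h_def)
    finally show ?thesis using se[OF t] by simp
  qed
  then show ?thesis using order_unique_hol[OF r hs hh s0 h0] by blast
qed




definition Fp :: "(nat \<Rightarrow> real) \<Rightarrow> nat set \<Rightarrow> complex poly" where
  "Fp a S = (\<Prod>i\<in>S. [:- complex_of_real (a i), 1:])"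

lemma poly_Fp: "poly (Fp a S) z = (\<Prod>i\<in>S. z - complex_of_real (a i))"
  by (simp add: Fp_def poly_prod)

lemma Fp_nz: "Fp a S \<noteq> 0"
  unfolding Fp_def by (cases "finite S") (auto simp: prod_zero_iff)

lemma degree_Fp: "finite S \<Longrightarrow> degree (Fp a S) = card S"
  unfolding Fp_def by (subst degree_prod_eq_sum_degree) auto

lemma lead_Fp: "lead_coeff (Fp a S) = 1"
  unfolding Fp_def by (simp add: lead_coeff_prod)

lemma Fp_cnj: "map_poly cnj (Fp a S) = Fp a S"
proof -
  have "poly (map_poly cnj (Fp a S)) = poly (Fp a S)"
    by (rule ext) (simp add: poly_Fp)
  then show ?thesis using poly_eq_poly_eq_iff by blast
qed

lemma coeff_Fp_real: "cnj (coeff (Fp a S) k) = coeff (Fp a S) k"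
proof -
  have "coeff (map_poly cnj (Fp a S)) k = cnj (coeff (Fp a S) k)"
    by (simp add: coeff_map_poly)
  then show ?thesis using Fp_cnj by simp
qed

lemma poly_Fp_real: "cnj (poly (Fp a S) (complex_of_real x)) = poly (Fp a S) (complex_of_real x)"
  by (simp add: poly_Fp)

lemma Fp_root_iff:
  assumes "S \<subseteq> I" "inj_on a I" "j \<in> I" "finite S"
  shows "poly (Fp a S) (complex_of_real (a j)) = 0 \<longleftrightarrow> j \<in> S"
proof -
  have "poly (Fp a S) (complex_of_real (a j)) = 0 \<longleftrightarrow> (\<exists>i\<in>S. a j = a i)"
    using assms(4) by (simp add: poly_Fp prod_zero_iff)
  also have "\<dots> \<longleftrightarrow> j \<in> S" using assms(1-3) by (auto dest: inj_onD)
  finally show ?thesis .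
qed

lemma Fp_root_in:
  assumes "finite S" "poly (Fp a S) z = 0"
  shows "\<exists>j\<in>S. z = complex_of_real (a j)"
  using assms by (simp add: poly_Fp prod_zero_iff)

lemma Fp_split:
  assumes "finite U" "j \<in> U"
  shows "Fp a U = [:- complex_of_real (a j), 1:] * Fp a (U - {j})"
  unfolding Fp_def using assms by (simp add: prod.remove)

lemma Fp_union:
  assumes "S \<subseteq> I" "finite I"
  shows "Fp a S * Fp a (I - S) = Fp a I"
  unfolding Fp_def using prod.subset_diff[OF assms, of "\<lambda>i. [:- complex_of_real (a i), 1:]"]
  by (simp add: ac_simps)

lemma Fp_inj:
  assumes "S \<subseteq> I" "T \<subseteq> I" "inj_on a I" "finite I" "u \<noteq> 0"
    and eq: "smult u (Fp a S) = smult w (Fp a T)"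
  shows "S = T"
proof -
  have w: "w \<noteq> 0" using eq assms(5) Fp_nz[of a S] by auto
  have fin: "finite S" "finite T" using assms(1,2,4) finite_subset by auto
  have "j \<in> S \<longleftrightarrow> j \<in> T" if j: "j \<in> I" for j
  proof -
    have "poly (smult u (Fp a S)) (complex_of_real (a j)) = poly (smult w (Fp a T)) (complex_of_real (a j))"
      using eq by simp
    then have "poly (Fp a S) (complex_of_real (a j)) = 0 \<longleftrightarrow> poly (Fp a T) (complex_of_real (a j)) = 0"
      using assms(5) w by auto
    then show ?thesis using Fp_root_iff[OF assms(1,3) j fin(1)] Fp_root_iff[OF assms(2,3) j fin(2)] by simp
  qed
  then show ?thesis using assms(1,2) by blast
qed

lemma order_Fp_le1:
  assumes "finite I" "inj_on a I"
  shows "order z (Fp a I) \<le> 1"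
proof (cases "poly (Fp a I) z = 0")
  case False then show ?thesis using order_0I[OF False] by simp
next
  case True
  then obtain j where j: "j \<in> I" "z = complex_of_real (a j)" using Fp_root_in[OF assms(1)] by blast
  have sp: "Fp a I = [:-z, 1:] ^ 1 * Fp a (I - {j})" using Fp_split[OF assms(1) j(1)] j(2) by simp
  have "poly (Fp a (I - {j})) z \<noteq> 0"
    using Fp_root_iff[of "I - {j}" I a j] assms j by auto
  then have "order z (Fp a (I - {j})) = 0" by (rule order_0I)
  moreover have "order z (Fp a I) = order z ([:-z, 1:] ^ 1) + order z (Fp a (I - {j}))"
  proof -
    have ne: "[:-z, 1:] ^ 1 * Fp a (I - {j}) \<noteq> 0" by (rule no_zero_divisors) (simp_all add: Fp_nz)
    show ?thesis unfolding sp by (rule order_mult[OF ne])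
  qed
  ultimately show ?thesis using order_power_n_n[of z 1] by simp
qed

lemma even_orders_square:
  fixes R :: "complex poly"
  assumes R0: "R \<noteq> 0" and ev: "\<And>z. even (order z R)"
  shows "\<exists>e Q. e \<noteq> 0 \<and> R = smult e (Q^2)"
proof -
  define Q where "Q = (\<Prod>z|poly R z = 0. [:-z, 1:] ^ (order z R div 2))"
  have "Q^2 = (\<Prod>z|poly R z = 0. ([:-z, 1:] ^ (order z R div 2))^2)"
    unfolding Q_def by (rule prod_power_distrib)
  also have "\<dots> = (\<Prod>z|poly R z = 0. [:-z, 1:] ^ order z R)"
  proof (rule prod.cong[OF refl])
    fix z
    have e2: "order z R div 2 * 2 = order z R" using ev[of z] by simp
    have "([:-z, 1:] ^ (order z R div 2))^2 = [:-z, 1:] ^ (order z R div 2 * 2)"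
      by (rule power_mult[symmetric])
    then show "([:-z, 1:] ^ (order z R div 2))^2 = [:-z, 1:] ^ order z R"
      by (simp only: e2)
  qed
  finally have Qe: "Q^2 = (\<Prod>z|poly R z = 0. [:-z, 1:] ^ order z R)" .
  have "smult (lead_coeff R) (Q^2) = R" unfolding Qe by (rule complex_poly_decompose)
  then have "R = smult (lead_coeff R) (Q^2)" by (rule sym)
  moreover have "lead_coeff R \<noteq> 0" using R0 by simp
  ultimately show ?thesis by (intro exI[of _ "lead_coeff R"] exI[of _ Q] conjI)
qed

lemma factor_split:
  fixes A B :: "complex poly"
  assumes fin: "finite I" and inj: "inj_on a I" and AB: "A * B = smult \<kappa> (Fp a I)" and k: "\<kappa> \<noteq> 0"
  shows "\<exists>S\<subseteq>I. A = smult (lead_coeff A) (Fp a S) \<and> B = smult (lead_coeff B) (Fp a (I - S))"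
proof -
  have AB0: "A * B \<noteq> 0" using AB k Fp_nz[of a I] by simp
  then have A0: "A \<noteq> 0" and B0: "B \<noteq> 0" by auto
  have osum: "order z A + order z B \<le> 1" for z
    using order_mult[OF AB0, of z] AB order_smult[OF k] order_Fp_le1[OF fin inj, of z] by simp
  have rootAB: "poly A z = 0 \<or> poly B z = 0 \<longleftrightarrow> poly (Fp a I) z = 0" for z
  proof -
    have "poly (A * B) z = \<kappa> * poly (Fp a I) z" using AB by simp
    then show ?thesis using k by auto
  qed
  define ca where "ca = (\<lambda>i. complex_of_real (a i))"
  have injc: "inj_on ca I" using inj unfolding ca_def inj_on_def by auto
  have decomp: "C = smult (lead_coeff C) (Fp a {i\<in>I. poly C (ca i) = 0})"
    if C0: "C \<noteq> 0" and oC: "\<And>z. order z C \<le> 1" and rC: "\<And>z. poly C z = 0 \<Longrightarrow> poly (Fp a I) z = 0"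
    for C :: "complex poly"
  proof -
    have "order z C = 0 \<or> order z C = 1" for z using oC[of z] by linarith
    then have rsq: "rsquarefree C" unfolding rsquarefree_def using C0 by blast
    have img: "{z. poly C z = 0} = ca ` {i\<in>I. poly C (ca i) = 0}"
    proof
      show "{z. poly C z = 0} \<subseteq> ca ` {i\<in>I. poly C (ca i) = 0}"
      proof
        fix z assume "z \<in> {z. poly C z = 0}"
        then have z: "poly C z = 0" by simp
        then obtain j where "j \<in> I" "z = ca j" using rC Fp_root_in[OF fin] unfolding ca_def by blast
        then show "z \<in> ca ` {i\<in>I. poly C (ca i) = 0}" using z by auto
      qed
    qed auto
    have inj2: "inj_on ca {i\<in>I. poly C (ca i) = 0}" using injc by (rule inj_on_subset) auto
    have "(\<Prod>z|poly C z = 0. [:-z, 1:]) = (\<Prod>z\<in>ca ` {i\<in>I. poly C (ca i) = 0}. [:-z, 1:])"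
      using img by simp
    also have "\<dots> = Fp a {i\<in>I. poly C (ca i) = 0}"
      unfolding Fp_def by (subst prod.reindex[OF inj2]) (simp add: ca_def)
    finally show ?thesis using complex_poly_decompose_rsquarefree[OF rsq] by simp
  qed
  define S where "S = {i\<in>I. poly A (ca i) = 0}"
  have oA: "order z A \<le> 1" for z using osum[of z] by linarith
  have rA: "poly (Fp a I) z = 0" if "poly A z = 0" for z using rootAB[of z] that by blast
  have oB: "order z B \<le> 1" for z using osum[of z] by linarith
  have rB: "poly (Fp a I) z = 0" if "poly B z = 0" for z using rootAB[of z] that by blast
  have hA: "A = smult (lead_coeff A) (Fp a S)" unfolding S_def using decomp[OF A0 oA rA] .
  have hB: "B = smult (lead_coeff B) (Fp a {i\<in>I. poly B (ca i) = 0})" using decomp[OF B0 oB rB] .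
  have eqT: "{i\<in>I. poly B (ca i) = 0} = I - S"
  proof (rule set_eqI, rule iffI)
    fix i assume i: "i \<in> {i\<in>I. poly B (ca i) = 0}"
    have "order (ca i) B \<noteq> 0" using i B0 order_root by auto
    then have "order (ca i) A = 0" using osum[of "ca i"] by linarith
    then have "poly A (ca i) \<noteq> 0" using A0 order_root by blast
    then show "i \<in> I - S" using i by (auto simp: S_def)
  next
    fix i assume i: "i \<in> I - S"
    have "poly (Fp a I) (ca i) = 0" using Fp_root_iff[OF subset_refl inj _ fin] i by (auto simp: ca_def)
    then show "i \<in> {i\<in>I. poly B (ca i) = 0}" using i rootAB[of "ca i"] by (auto simp: S_def)
  qed
  have hB': "B = smult (lead_coeff B) (Fp a (I - S))" using hB unfolding eqT .
  have "S \<subseteq> I" by (auto simp: S_def)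
  then show ?thesis using hA hB' by blast
qed




definition rev_n :: "nat \<Rightarrow> complex poly \<Rightarrow> complex poly" where
  "rev_n n P = (\<Sum>k\<le>n. monom (coeff P k) (n - k))"

definition FB :: "(nat \<Rightarrow> real) \<Rightarrow> nat set \<Rightarrow> complex poly" where
  "FB a I = (\<Prod>i\<in>I. [:1, - complex_of_real (a i):])"

lemma poly_sum_n:
  fixes P :: "complex poly"
  assumes "degree P \<le> n"
  shows "poly P z = (\<Sum>k\<le>n. coeff P k * z^k)"
proof -
  have "poly P z = (\<Sum>k\<le>degree P. coeff P k * z^k)" by (rule poly_altdef)
  also have "\<dots> = (\<Sum>k\<le>n. coeff P k * z^k)"
    by (rule sum.mono_neutral_left) (use assms in \<open>auto simp: coeff_eq_0\<close>)
  finally show ?thesis .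
qed

lemma poly_rev_n: "poly (rev_n n P) w = (\<Sum>k\<le>n. coeff P k * w^(n - k))"
  by (simp add: rev_n_def poly_sum poly_monom)

lemma poly_rev_n_inv:
  assumes "degree P \<le> n" "w \<noteq> 0"
  shows "poly (rev_n n P) w = w^n * poly P (1/w)"
proof -
  have "poly (rev_n n P) w = (\<Sum>k\<le>n. coeff P k * w^(n - k))" by (rule poly_rev_n)
  also have "\<dots> = (\<Sum>k\<le>n. w^n * (coeff P k * (1/w)^k))"
  proof (rule sum.cong[OF refl])
    fix k assume "k \<in> {..n}"
    then have "w^(n - k) = w^n / w^k" using assms(2) by (simp add: power_diff)
    then show "coeff P k * w^(n - k) = w^n * (coeff P k * (1/w)^k)"
      by (simp add: power_one_over)
  qed
  also have "\<dots> = w^n * poly P (1/w)"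
    by (simp add: sum_distrib_left[symmetric] poly_sum_n[OF assms(1)])
  finally show ?thesis .
qed

lemma poly_FB:
  assumes "finite I" "w \<noteq> 0"
  shows "poly (FB a I) w = w^(card I) * poly (Fp a I) (1/w)"
proof -
  have "poly (FB a I) w = (\<Prod>i\<in>I. w * (1/w - complex_of_real (a i)))"
    unfolding FB_def poly_prod
    by (rule prod.cong[OF refl]) (use assms(2) in \<open>simp add: algebra_simps\<close>)
  also have "\<dots> = w^(card I) * (\<Prod>i\<in>I. (1/w - complex_of_real (a i)))"
    by (simp add: prod.distrib)
  finally show ?thesis by (simp add: poly_Fp)
qed

lemma poly_eq_on_nonzero:
  fixes D :: "complex poly"
  assumes "\<And>w. w \<noteq> 0 \<Longrightarrow> poly D w = 0"
  shows "D = 0"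
proof (rule ccontr)
  assume D: "D \<noteq> 0"
  have "- {0} \<subseteq> {w. poly D w = 0}" using assms by auto
  moreover have "finite {w. poly D w = 0}" using poly_roots_finite[OF D] .
  ultimately have "finite (- {0::complex})" using finite_subset by blast
  then have "finite (UNIV :: complex set)" by simp
  then show False using infinite_UNIV_char_0 by blast
qed

lemma ident_infinity:
  fixes P M :: "complex poly" and c :: complex
  assumes fin: "finite I" and cI: "card I = 2 * n" and dP: "degree P \<le> n" and dM: "degree M \<le> n"
    and iden: "\<And>z. poly P z ^ 2 - c^2 * poly (Fp a I) z = poly M z ^ 2"
  shows "poly (rev_n n P) w ^ 2 - c^2 * poly (FB a I) w = poly (rev_n n M) w ^ 2"
proof -
  define D where "D = (rev_n n P)^2 - smult (c^2) (FB a I) - (rev_n n M)^2"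
  have "poly D w = 0" if w: "w \<noteq> 0" for w
  proof -
    have "poly D w = (w^n * poly P (1/w))^2 - c^2 * (w^(2*n) * poly (Fp a I) (1/w)) - (w^n * poly M (1/w))^2"
      unfolding D_def using poly_rev_n_inv[OF dP w] poly_rev_n_inv[OF dM w] poly_FB[OF fin w, of a] cI
      by simp
    also have "\<dots> = w^(2*n) * (poly P (1/w) ^ 2 - c^2 * poly (Fp a I) (1/w) - poly M (1/w) ^ 2)"
      by (simp add: algebra_simps power_mult_distrib power_mult[symmetric] mult.commute[of 2 n])
    also have "\<dots> = 0" using iden[of "1/w"] by simp
    finally show ?thesis .
  qed
  then have "D = 0" by (rule poly_eq_on_nonzero)
  then have "poly D w = 0" by simp
  then show ?thesis unfolding D_def by simp
qed

lemma rev_n_nz: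
  fixes M :: "complex poly"
  assumes dM: "degree M \<le> n" and M0: "M \<noteq> 0"
  shows "rev_n n M \<noteq> 0"
proof -
  have "finite (insert 0 {z. poly M z = 0})" using poly_roots_finite[OF M0] by simp
  then obtain z where z: "z \<notin> insert 0 {z. poly M z = 0}"
    using ex_new_if_finite[OF infinite_UNIV_char_0] by blast
  then have z0: "z \<noteq> 0" and Mz: "poly M z \<noteq> 0" by auto
  have "poly (rev_n n M) (1/z) = (1/z)^n * poly M z"
    using poly_rev_n_inv[OF dM, of "1/z"] z0 by simp
  then have "poly (rev_n n M) (1/z) \<noteq> 0" using z0 Mz by simp
  then show ?thesis by auto
qed

lemma coeff_poly_of_fun:
  assumes "\<forall>k>n. h k = 0"
  shows "coeff (\<Sum>k\<le>n. monom (h k) k) = h" and "degree (\<Sum>k\<le>n. monom (h k) k) \<le> n"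
proof -
  show "coeff (\<Sum>k\<le>n. monom (h k) k) = h"
  proof
    fix j
    have "coeff (\<Sum>k\<le>n. monom (h k) k) j = (\<Sum>k\<le>n. if k = j then h k else 0)"
      by (simp add: coeff_sum)
    also have "\<dots> = h j" using assms by (cases "j \<le> n") (auto simp: sum.delta)
    finally show "coeff (\<Sum>k\<le>n. monom (h k) k) j = h j" .
  qed
  show "degree (\<Sum>k\<le>n. monom (h k) k) \<le> n"
    by (rule degree_sum_le) (auto intro: order.trans[OF degree_monom_le])
qed

lemma SigmaA_eq: "SigmaA n a = (\<lambda>z v. v^2 - poly (Fp a {1..2*n}) z)"
  by (intro ext) (simp add: SigmaA_def poly_Fp)

lemma SigmaB_eq: "SigmaB n a = (\<lambda>w u. u^2 - poly (FB a {1..2*n}) w)"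
  by (intro ext) (simp add: SigmaB_def FB_def poly_prod algebra_simps)

lemma LA_eq: "degree P \<le> n \<Longrightarrow> LA n (coeff P, c) = (\<lambda>z v. poly P z + c * v)"
  by (intro ext) (simp add: LA_def poly_sum_n)

lemma LB_eq: "LB n (coeff P, c) = (\<lambda>w u. poly (rev_n n P) w + c * u)"
  by (intro ext) (simp add: LB_def poly_rev_n)




definition GP :: "nat \<Rightarrow> (nat \<Rightarrow> real) \<Rightarrow> nat set \<Rightarrow> complex \<Rightarrow> complex poly" where
  "GP n a S t = smult ((1 + complex_of_real (Re t)) / 4) (Fp a S)
     + smult ((-1)^n * (1 - complex_of_real (Re t)) / 4) (Fp a ({1..2*n} - S))"

definition GM :: "nat \<Rightarrow> (nat \<Rightarrow> real) \<Rightarrow> nat set \<Rightarrow> complex \<Rightarrow> complex poly" where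
  "GM n a S t = smult ((1 + complex_of_real (Re t)) / 4) (Fp a S)
     - smult ((-1)^n * (1 - complex_of_real (Re t)) / 4) (Fp a ({1..2*n} - S))"

definition Gc :: "nat \<Rightarrow> complex \<Rightarrow> complex" where
  "Gc n t = \<i>^n * complex_of_real (Im t) / 2"

definition G :: "nat \<Rightarrow> (nat \<Rightarrow> real) \<Rightarrow> nat set \<Rightarrow> complex \<Rightarrow> hyp" where
  "G n a S t = (coeff (GP n a S t), Gc n t)"

lemma proj_eq_sym: "proj_eq H H' \<Longrightarrow> proj_eq H' H"
  unfolding proj_eq_def
proof (elim exE conjE)
  fix l assume l: "l \<noteq> 0" "fst H' = (\<lambda>k. l * fst H k)" "snd H' = l * snd H"
  show "\<exists>l. l \<noteq> 0 \<and> fst H = (\<lambda>k. l * fst H' k) \<and> snd H = l * snd H'"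
    using l by (intro exI[of _ "1/l"]) auto
qed

lemma proj_eq_trans: "proj_eq H H' \<Longrightarrow> proj_eq H' H'' \<Longrightarrow> proj_eq H H''"
  unfolding proj_eq_def
proof (elim exE conjE)
  fix l m assume l: "l \<noteq> 0" "fst H' = (\<lambda>k. l * fst H k)" "snd H' = l * snd H"
    and m: "m \<noteq> 0" "fst H'' = (\<lambda>k. m * fst H' k)" "snd H'' = m * snd H'"
  show "\<exists>l. l \<noteq> 0 \<and> fst H'' = (\<lambda>k. l * fst H k) \<and> snd H'' = l * snd H"
    using l m by (intro exI[of _ "m * l"]) auto
qed

lemma sphere_re_im: "t \<in> sphere (0::complex) 1 \<Longrightarrow> Re t ^ 2 + Im t ^ 2 = 1"
  using cmod_power2[of t] by simp

lemma card_compl: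
  assumes "S \<subseteq> {1..2*n}" "card S = n"
  shows "card ({1..2*n} - S) = n"
  using assms by (simp add: card_Diff_subset finite_subset)

lemma i_pow_sq: "(\<i>^n)^2 = ((-1)^n :: complex)"
proof -
  have "(\<i>^n)^2 = (\<i>^2)^n" by (simp only: power_mult[symmetric] mult.commute)
  then show ?thesis by simp
qed

lemma G_alg:
  fixes x y s p q :: complex
  assumes "x^2 + y^2 = 1"
  shows "((1+x)/4*p + s*(1-x)/4*q)^2 - (s * y^2/4) * (p*q) = ((1+x)/4*p - s*(1-x)/4*q)^2"
proof -
  have e1: "(A + B)^2 = (A - B)^2 + 4*A*B" for A B :: complex by (simp add: power2_eq_square algebra_simps)
  have e2: "4*((1+x)/4*p)*(s*(1-x)/4*q) = s*(1 - x^2)/4*(p*q)" by (simp add: power2_eq_square field_simps)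
  have e3: "1 - x^2 = y^2" using assms by (simp add: algebra_simps)
  show ?thesis unfolding e1 e2 e3 by simp
qed

context
  fixes n :: nat and a :: "nat \<Rightarrow> real" and S :: "nat set" and t :: complex
  assumes SI: "S \<subseteq> {1..2*n}" and cS: "card S = n"
begin

lemma finS: "finite S" using SI finite_subset by blast

lemma degree_GP: "degree (GP n a S t) \<le> n"
  unfolding GP_def using degree_Fp[OF finS, of a] cS degree_Fp[of "{1..2*n} - S" a] card_compl[OF SI cS]
  by (intro degree_add_le order.trans[OF degree_smult_le]) auto

lemma degree_GM: "degree (GM n a S t) \<le> n"
  unfolding GM_def using degree_Fp[OF finS, of a] cS degree_Fp[of "{1..2*n} - S" a] card_compl[OF SI cS]
  by (intro degree_diff_le order.trans[OF degree_smult_le]) auto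

lemma G_ident:
  assumes t: "t \<in> sphere 0 1"
  shows "poly (GP n a S t) z ^ 2 - Gc n t ^ 2 * poly (Fp a {1..2*n}) z = poly (GM n a S t) z ^ 2"
proof -
  have xy: "complex_of_real (Re t) ^ 2 + complex_of_real (Im t) ^ 2 = 1"
    using sphere_re_im[OF t] by (metis of_real_add of_real_power of_real_1)
  have f: "poly (Fp a {1..2*n}) z = poly (Fp a S) z * poly (Fp a ({1..2*n} - S)) z"
    using Fp_union[OF SI, of a] by (metis finite_atLeastAtMost poly_mult)
  have c2: "Gc n t ^ 2 = (-1)^n * complex_of_real (Im t) ^ 2 / 4"
    unfolding Gc_def by (simp add: power_mult_distrib power_divide i_pow_sq)
  show ?thesis
    unfolding f c2 GP_def GM_def poly_add poly_diff poly_smult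
    by (rule G_alg[OF xy])
qed

lemma GP_plus_GM: "GP n a S t + GM n a S t = smult ((1 + complex_of_real (Re t)) / 2) (Fp a S)"
  by (rule poly_eqI) (simp only: GP_def GM_def coeff_add coeff_diff coeff_smult, simp add: field_simps)

lemma GP_minus_GM: "GP n a S t - GM n a S t = smult ((-1)^n * (1 - complex_of_real (Re t)) / 2) (Fp a ({1..2*n} - S))"
  by (rule poly_eqI) (simp only: GP_def GM_def coeff_add coeff_diff coeff_smult, simp add: field_simps)

lemma coeff_Fp_n: "coeff (Fp a S) n = 1"
  using lead_Fp[of a S] degree_Fp[OF finS, of a] cS by simp

lemma coeff_Fp_n': "coeff (Fp a ({1..2*n} - S)) n = 1"
  using lead_Fp[of a "{1..2*n} - S"] degree_Fp[of "{1..2*n} - S" a] card_compl[OF SI cS] by simp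

lemma coeff_GP_n: "coeff (GP n a S t) n = (1 + complex_of_real (Re t)) / 4 + (-1)^n * (1 - complex_of_real (Re t)) / 4"
  unfolding GP_def by (simp only: coeff_add coeff_smult coeff_Fp_n coeff_Fp_n', simp)

lemma G_is_hyp:
  assumes t: "t \<in> sphere 0 1"
  shows "is_hyp n (G n a S t)"
proof -
  have hi: "\<forall>k>n. coeff (GP n a S t) k = 0" using degree_GP by (auto intro: coeff_eq_0)
  have "coeff (GP n a S t) n \<noteq> 0 \<or> Gc n t \<noteq> 0"
  proof (cases "Im t = 0")
    case True
    then have "Re t ^ 2 = 1" using sphere_re_im[OF t] by simp
    then have "Re t = 1 \<or> Re t = -1" by (metis power2_eq_1_iff)
    then have "coeff (GP n a S t) n \<noteq> 0" by (auto simp: coeff_GP_n)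
    then show ?thesis ..
  next
    case False then show ?thesis by (simp add: Gc_def)
  qed
  then show ?thesis unfolding is_hyp_def G_def using hi by auto
qed

lemma G_real: "real_hyp n (G n a S t)"
  unfolding real_hyp_def G_def
proof (intro exI[of _ 1] conjI allI)
  fix k
  show "cnj (fst (coeff (GP n a S t), Gc n t) k) = 1 * fst (coeff (GP n a S t), Gc n t) k"
    by (simp add: GP_def coeff_Fp_real)
  have m: "(-1)^n * (- \<i>)^n = (\<i>::complex)^n" by (simp add: power_mult_distrib[symmetric])
  then show "(-1)^n * cnj (snd (coeff (GP n a S t), Gc n t)) = 1 * snd (coeff (GP n a S t), Gc n t)"
    by (simp add: Gc_def m mult.assoc[symmetric])
qed simp

lemma G_cont:
  "(\<forall>k. continuous_on (sphere 0 1) (\<lambda>t. fst (G n a S t) k)) \<and> continuous_on (sphere 0 1) (\<lambda>t. snd (G n a S t))"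
  unfolding G_def GP_def Gc_def by (auto intro!: continuous_intros)

lemma G_vertex1: "proj_eq (vertex_hyp n a S) (G n a S 1)"
  unfolding proj_eq_def vertex_hyp_def G_def GP_def Gc_def Fp_def
  by (intro exI[of _ "1/2"]) auto

lemma G_vertex2: "proj_eq (vertex_hyp n a ({1..2*n} - S)) (G n a S (-1))"
  unfolding proj_eq_def vertex_hyp_def G_def GP_def Gc_def Fp_def
  by (intro exI[of _ "(-1)^n/2"]) auto

end

definition sigma :: "nat \<Rightarrow> complex \<Rightarrow> complex" where
  "sigma n t = Complex (- Re t) ((-1)^n * Im t)"

lemma sigma_sphere: "t \<in> sphere 0 1 \<Longrightarrow> sigma n t \<in> sphere 0 1"
proof -
  have "((-1::real)^n)^2 = 1" by (cases "even n") auto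
  then show "t \<in> sphere 0 1 \<Longrightarrow> sigma n t \<in> sphere 0 1"
    using sphere_re_im[of t] by (simp add: sigma_def cmod_def power_mult_distrib)
qed

lemma G_swap:
  assumes SI: "S \<subseteq> {1..2*n}"
  shows "proj_eq (G n a S (sigma n t)) (G n a ({1..2*n} - S) t)"
proof -
  have dd: "{1..2*n} - ({1..2*n} - S) = S" using SI by auto
  have s2: "((-1)^n * (-1)^n :: complex) = 1" by (simp add: power_mult_distrib[symmetric])
  show ?thesis
    unfolding proj_eq_def G_def
  proof (intro exI[of _ "(-1)^n"] conjI)
    show "fst (coeff (GP n a ({1..2*n} - S) t), Gc n t) = (\<lambda>k. (-1)^n * fst (coeff (GP n a S (sigma n t)), Gc n (sigma n t)) k)"
      by (rule ext) (simp only: GP_def dd, simp add: sigma_def algebra_simps s2)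
    show "snd (coeff (GP n a ({1..2*n} - S) t), Gc n t) = (-1)^n * snd (coeff (GP n a S (sigma n t)), Gc n (sigma n t))"
      by (simp add: Gc_def sigma_def algebra_simps s2)
  qed simp
qed




lemma vertex_branch:
  assumes fin: "finite I" and inj: "inj_on a I" and U: "U \<subseteq> I" and j: "j \<in> U"
    and \<kappa>: "\<kappa> \<noteq> 0" and c: "c = 0"
  shows "contact_order (\<lambda>z v. v^2 - poly (Fp a I) z) (\<lambda>z v. poly (smult \<kappa> (Fp a U)) z + c * v)
           (complex_of_real (a j), 0) 2"
proof (rule branch_contact[OF _ _ _ _ c])
  have jI: "j \<in> I" using U j by auto
  have finU: "finite U" using fin U finite_subset by blast
  show "Fp a I = [:- complex_of_real (a j), 1:] * Fp a (I - {j})" by (rule Fp_split[OF fin jI])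
  show "poly (Fp a (I - {j})) (complex_of_real (a j)) \<noteq> 0"
    using Fp_root_iff[of "I - {j}" I a j] fin inj jI by auto
  show "smult \<kappa> (Fp a U) = [:- complex_of_real (a j), 1:] * smult \<kappa> (Fp a (U - {j}))"
    using Fp_split[OF finU j, of a] by (simp add: mult_smult_right)
  show "poly (smult \<kappa> (Fp a (U - {j}))) (complex_of_real (a j)) \<noteq> 0"
    using Fp_root_iff[of "U - {j}" I a j] fin inj jI U \<kappa> finU by auto
qed

lemma poly_rev_n_0: "poly (rev_n n P) 0 = coeff P n"
proof -
  have "poly (rev_n n P) 0 = (\<Sum>k\<le>n. coeff P k * 0^(n - k))" by (rule poly_rev_n)
  also have "\<dots> = (\<Sum>k\<le>n. if k = n then coeff P k else 0)"
    by (rule sum.cong[OF refl]) auto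
  also have "\<dots> = coeff P n" by simp
  finally show ?thesis .
qed

lemma poly_FB_0: "poly (FB a I) 0 = 1"
  by (simp add: FB_def poly_prod)

lemma G_even:
  assumes SI: "S \<subseteq> {1..2*n}" and cS: "card S = n" and n: "n \<ge> 1"
    and inj: "inj_on a {1..2*n}" and t: "t \<in> sphere 0 1"
  shows "evenly_tangent n a (G n a S t)"
proof -
  define I where "I = {1..2*n}"
  have fin: "finite I" by (simp add: I_def)
  have cI: "card I = 2 * n" by (simp add: I_def)
  define P where "P = GP n a S t"
  define M where "M = GM n a S t"
  define c where "c = Gc n t"
  define x where "x = Re t"
  define y where "y = Im t"
  have xy: "x^2 + y^2 = 1" using sphere_re_im[OF t] by (simp add: x_def y_def)
  have dP: "degree P \<le> n" unfolding P_def using degree_GP[OF SI cS] .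
  have dM: "degree M \<le> n" unfolding M_def using degree_GM[OF SI cS] .
  have iden: "\<And>z. poly P z ^ 2 - c^2 * poly (Fp a I) z = 1 * poly M z ^ 2"
    using G_ident[OF SI cS t] by (simp add: P_def c_def M_def I_def)
  have SI': "S \<subseteq> I" using SI by (simp add: I_def)
  have finS: "finite S" using SI' fin finite_subset by blast
  have cSc: "card (I - S) = n" using card_compl[OF SI cS] by (simp add: I_def)
  have Scne: "I - S \<noteq> {}"
  proof
    assume "I - S = {}"
    then have "card (I - S) = 0" by (simp only: card.empty)
    then show False using cSc n by simp
  qed
  have inj': "inj_on a I" using inj by (simp add: I_def)
  have rS: "poly (Fp a S) (complex_of_real (a j)) = 0 \<longleftrightarrow> j \<in> S" if "j \<in> I" for j
    using Fp_root_iff[OF SI' inj' that finS] .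
  have rSc: "poly (Fp a (I - S)) (complex_of_real (a j)) = 0 \<longleftrightarrow> j \<notin> S" if "j \<in> I" for j
    using Fp_root_iff[of "I - S" I a j] inj' that fin by auto
  have polyP: "poly P z = (1 + complex_of_real x) / 4 * poly (Fp a S) z
      + (-1)^n * (1 - complex_of_real x) / 4 * poly (Fp a (I - S)) z" for z
    by (simp add: P_def GP_def x_def I_def)
  have polyM: "poly M z = (1 + complex_of_real x) / 4 * poly (Fp a S) z
      - (-1)^n * (1 - complex_of_real x) / 4 * poly (Fp a (I - S)) z" for z
    by (simp add: M_def GM_def x_def I_def)
  have G_eq: "G n a S t = (coeff P, c)" by (simp add: G_def P_def c_def)
  have LA': "LA n (G n a S t) = (\<lambda>z v. poly P z + c * v)" unfolding G_eq by (rule LA_eq[OF dP])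
  have LB': "LB n (G n a S t) = (\<lambda>w u. poly (rev_n n P) w + c * u)" unfolding G_eq by (rule LB_eq)
  have SA: "SigmaA n a = (\<lambda>z v. v^2 - poly (Fp a I) z)" unfolding I_def by (rule SigmaA_eq)
  have SB: "SigmaB n a = (\<lambda>w u. u^2 - poly (FB a I) w)" unfolding I_def by (rule SigmaB_eq)
  show ?thesis
    unfolding evenly_tangent_def LA' LB' SA SB
  proof (intro conjI allI impI)
    fix z v assume zv: "v^2 - poly (Fp a I) z = 0 \<and> poly P z + c * v = 0"
    show "\<exists>k\<ge>2. even k \<and> contact_order (\<lambda>z v. v^2 - poly (Fp a I) z) (\<lambda>z v. poly P z + c * v) (z, v) k"
    proof (cases "y = 0")
      case False
      then have c0: "c \<noteq> 0" by (simp add: c_def Gc_def y_def)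
      have x1: "x \<noteq> 1" "x \<noteq> -1" using xy False by auto
      have v0: "v \<noteq> 0"
      proof
        assume v: "v = 0"
        then have "poly (Fp a I) z = 0" using zv by simp
        then obtain j where j: "j \<in> I" "z = complex_of_real (a j)" using Fp_root_in[OF fin] by blast
        have "poly P z = 0" using zv v by simp
        moreover have "poly P z \<noteq> 0"
        proof (cases "j \<in> S")
          case True
          then have "poly (Fp a S) z = 0" "poly (Fp a (I - S)) z \<noteq> 0" using rS[OF j(1)] rSc[OF j(1)] j by auto
          moreover have "(1 - complex_of_real x) \<noteq> 0" using x1 by (metis eq_iff_diff_eq_0 of_real_eq_1_iff)
          ultimately show ?thesis by (simp add: polyP)
        next
          case False
          then have "poly (Fp a S) z \<noteq> 0" "poly (Fp a (I - S)) z = 0" using rS[OF j(1)] rSc[OF j(1)] j by auto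
          moreover have "(1 + complex_of_real x) \<noteq> 0"
            using x1 by (metis add.commute add_eq_0_iff of_real_1 of_real_eq_iff of_real_minus)
          ultimately show ?thesis by (simp add: polyP)
        qed
        ultimately show False by simp
      qed
      have M0: "M \<noteq> 0"
      proof
        assume "M = 0"
        obtain j where j: "j \<in> I - S" using Scne by blast
        have "poly (Fp a S) (complex_of_real (a j)) \<noteq> 0" "poly (Fp a (I - S)) (complex_of_real (a j)) = 0"
          using rS[of j] rSc[of j] j by auto
        moreover have "(1 + complex_of_real x) \<noteq> 0"
          using x1 by (metis add.commute add_eq_0_iff of_real_1 of_real_eq_iff of_real_minus)
        ultimately have "poly M (complex_of_real (a j)) \<noteq> 0" by (simp add: polyM)
        then show False using \<open>M = 0\<close> by simp
      qed
      have v2: "v^2 = poly (Fp a I) z" using zv by simp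
      have L0: "poly P z + c * v = 0" using zv by simp
      show ?thesis
        using nonbranch_contact[OF c0 one_neq_zero[where 'a=complex] M0 iden v0 v2 L0]
        by (intro exI[of _ "2 * order z M"]) auto
    next
      case True
      then have c0: "c = 0" by (simp add: c_def Gc_def y_def)
      have "x = 1 \<or> x = -1" using xy True by (metis power2_eq_1_iff add_0_right zero_power2)
      then show ?thesis
      proof
        assume x: "x = 1"
        have Pe: "P = smult (1/2) (Fp a S)" unfolding P_def GP_def using x by (simp add: x_def)
        have "poly (Fp a S) z = 0" using zv c0 by (simp add: Pe)
        then obtain j where j: "j \<in> S" "z = complex_of_real (a j)" using Fp_root_in[OF finS] by blast
        have "poly (Fp a I) z = 0" using j SI' rS[of j] by (simp add: poly_Fp prod_zero_iff fin) (use SI' in blast)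
        then have v: "v = 0" using zv by simp
        show ?thesis unfolding Pe j(2) v
          using vertex_branch[OF fin inj' SI' j(1), of "1/2" c] c0 by auto
      next
        assume x: "x = -1"
        have Pe: "P = smult ((-1)^n/2) (Fp a (I - S))" unfolding P_def GP_def using x by (simp add: x_def I_def)
        have "poly (Fp a (I - S)) z = 0" using zv c0 by (simp add: Pe)
        then obtain j where j: "j \<in> I - S" "z = complex_of_real (a j)" using Fp_root_in[of "I - S"] fin by blast
        have "poly (Fp a I) z = 0" using j by (simp add: poly_Fp prod_zero_iff fin) (use j in blast)
        then have v: "v = 0" using zv by simp
        show ?thesis unfolding Pe j(2) v
          using vertex_branch[OF fin inj' _ j(1), of "(-1)^n/2" c] c0 by auto
      qed
    qed
  next
    fix u assume uv: "u^2 - poly (FB a I) 0 = 0 \<and> poly (rev_n n P) 0 + c * u = 0"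
    have u2: "u^2 = poly (FB a I) 0" using uv by simp
    have L0: "poly (rev_n n P) 0 + c * u = 0" using uv by simp
    show "\<exists>k\<ge>2. even k \<and> contact_order (\<lambda>w u. u^2 - poly (FB a I) w) (\<lambda>w u. poly (rev_n n P) w + c * u) (0, u) k"
    proof (cases "y = 0")
      case True
      then have c0: "c = 0" by (simp add: c_def Gc_def y_def)
      have "x = 1 \<or> x = -1" using xy True by (metis power2_eq_1_iff add_0_right zero_power2)
      then have "coeff P n \<noteq> 0" using coeff_GP_n[OF SI cS, of a t] by (auto simp: P_def x_def)
      then show ?thesis using L0 c0 by (simp add: poly_rev_n_0)
    next
      case False
      then have c0: "c \<noteq> 0" by (simp add: c_def Gc_def y_def)
      have u0: "u \<noteq> 0" using u2 by (auto simp: poly_FB_0)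
      have x1: "x \<noteq> -1" using xy False by auto
      have M0: "M \<noteq> 0"
      proof
        assume "M = 0"
        obtain j where j: "j \<in> I - S" using Scne by blast
        have "poly (Fp a S) (complex_of_real (a j)) \<noteq> 0" "poly (Fp a (I - S)) (complex_of_real (a j)) = 0"
          using rS[of j] rSc[of j] j by auto
        moreover have "(1 + complex_of_real x) \<noteq> 0"
          using x1 by (metis add.commute add_eq_0_iff of_real_1 of_real_eq_iff of_real_minus)
        ultimately have "poly M (complex_of_real (a j)) \<noteq> 0" by (simp add: polyM)
        then show False using \<open>M = 0\<close> by simp
      qed
      have idB: "\<And>w. poly (rev_n n P) w ^ 2 - c^2 * poly (FB a I) w = 1 * poly (rev_n n M) w ^ 2"
        using ident_infinity[OF fin cI dP dM] iden by simp
      show ?thesis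
        using nonbranch_contact[OF c0 one_neq_zero[where 'a=complex] rev_n_nz[OF dM M0] idB u0 u2 L0]
        by (intro exI[of _ "2 * order 0 (rev_n n M)"]) auto
    qed
  qed
qed




lemma smult_Fp_cancel: "smult u (Fp a U) = smult w (Fp a U) \<Longrightarrow> u = w"
  by (metis lead_Fp lead_coeff_smult mult.right_neutral)

lemma G_at_pm1:
  assumes "Im t = 0" "t \<in> sphere 0 1"
  shows "(Re t = 1 \<and> GP n a S t = smult (1/2) (Fp a S) \<and> t = 1) \<or>
         (Re t = -1 \<and> GP n a S t = smult ((-1)^n/2) (Fp a ({1..2*n} - S)) \<and> t = -1)"
proof -
  have "Re t ^ 2 = 1" using sphere_re_im[OF assms(2)] assms(1) by simp
  then have "Re t = 1 \<or> Re t = -1" by (metis power2_eq_1_iff)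
  then show ?thesis
  proof
    assume x: "Re t = 1"
    then have "t = 1" using assms(1) by (simp add: complex_eq_iff)
    then show ?thesis using x by (simp add: GP_def)
  next
    assume x: "Re t = -1"
    then have "t = -1" using assms(1) by (simp add: complex_eq_iff)
    then show ?thesis using x by (simp add: GP_def)
  qed
qed

lemma G_inj:
  assumes SI: "S \<subseteq> {1..2*n}" and cS: "card S = n" and TI: "T \<subseteq> {1..2*n}" and cT: "card T = n"
    and inj: "inj_on a {1..2*n}" and t: "t \<in> sphere 0 1" and t': "t' \<in> sphere 0 1"
    and pe: "proj_eq (G n a S t) (G n a T t')"
  shows "(T = S \<and> t' = t) \<or> T = {1..2*n} - S"
proof -
  define I where "I = {1..2*n}"
  have fin: "finite I" by (simp add: I_def)
  have inj': "inj_on a I" using inj by (simp add: I_def)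
  have SI': "S \<subseteq> I" and TI': "T \<subseteq> I" using SI TI by (auto simp: I_def)
  obtain l where l0: "l \<noteq> 0" and hc: "coeff (GP n a T t') = (\<lambda>k. l * coeff (GP n a S t) k)"
    and hGc: "Gc n t' = l * Gc n t"
    using pe unfolding proj_eq_def G_def by auto
  have hP: "GP n a T t' = smult l (GP n a S t)" by (rule poly_eqI) (simp add: hc)
  have dI: "I - (I - S) = S" "I - (I - T) = T" using SI' TI' by auto
  show ?thesis
  proof (cases "Im t = 0")
    case True
    then have "Gc n t' = 0" using hGc by (simp add: Gc_def)
    then have y': "Im t' = 0" by (simp add: Gc_def)
    from G_at_pm1[OF True t, of n a S] G_at_pm1[OF y' t', of n a T]
    show ?thesis
    proof (elim disjE conjE)
      assume "GP n a S t = smult (1/2) (Fp a S)" "t = 1" "GP n a T t' = smult (1/2) (Fp a T)" "t' = 1"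
      then have e: "smult (1/2) (Fp a T) = smult (l/2) (Fp a S)" using hP by simp
      have "T = S" by (rule Fp_inj[OF TI' SI' inj' fin _ e]) simp
      then show ?thesis using \<open>t = 1\<close> \<open>t' = 1\<close> by simp
    next
      assume "GP n a S t = smult (1/2) (Fp a S)" "GP n a T t' = smult ((-1)^n/2) (Fp a ({1..2*n} - T))"
      then have e: "smult ((-1)^n/2) (Fp a (I - T)) = smult (l/2) (Fp a S)" using hP by (simp add: I_def)
      have "I - T = S" by (rule Fp_inj[OF _ SI' inj' fin _ e]) auto
      then have "I - S = T" using dI(2) by simp
      then show ?thesis by (simp add: I_def)
    next
      assume "GP n a S t = smult ((-1)^n/2) (Fp a ({1..2*n} - S))" "GP n a T t' = smult (1/2) (Fp a T)"
      then have e: "smult (1/2) (Fp a T) = smult (l * (-1)^n/2) (Fp a (I - S))" using hP by (simp add: I_def)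
      have "T = I - S" by (rule Fp_inj[OF TI' _ inj' fin _ e]) auto
      then show ?thesis by (simp add: I_def)
    next
      assume "GP n a S t = smult ((-1)^n/2) (Fp a ({1..2*n} - S))" "t = -1"
        "GP n a T t' = smult ((-1)^n/2) (Fp a ({1..2*n} - T))" "t' = -1"
      then have e: "smult ((-1)^n/2) (Fp a (I - T)) = smult (l * (-1)^n/2) (Fp a (I - S))" using hP by (simp add: I_def)
      have "I - T = I - S" by (rule Fp_inj[OF _ _ inj' fin _ e]) auto
      then have "I - (I - T) = I - (I - S)" by simp
      then have "T = S" using dI by simp
      then show ?thesis using \<open>t = -1\<close> \<open>t' = -1\<close> by simp
    qed
  next
    case False
    have y'0: "Im t' \<noteq> 0" using hGc False l0 by (auto simp: Gc_def)
    have x1: "Re t \<noteq> -1" using sphere_re_im[OF t] False by auto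
    have x1': "Re t' \<noteq> -1" using sphere_re_im[OF t'] y'0 by auto
    have ox: "1 + complex_of_real (Re t) \<noteq> 0" "1 + complex_of_real (Re t') \<noteq> 0"
      using x1 x1' by (metis add.commute add_eq_0_iff of_real_1 of_real_eq_iff of_real_minus)+
    define M where "M = GM n a S t"
    define M' where "M' = GM n a T t'"
    have "poly (M'^2) z = poly (smult (l^2) (M^2)) z" for z
    proof -
      have "poly (M'^2) z = poly (GP n a T t') z ^ 2 - Gc n t' ^ 2 * poly (Fp a I) z"
        using G_ident[OF TI cT t', where z=z] by (simp add: M'_def I_def)
      also have "\<dots> = l^2 * (poly (GP n a S t) z ^ 2 - Gc n t ^ 2 * poly (Fp a I) z)"
        by (simp add: hP hGc power_mult_distrib algebra_simps)
      also have "\<dots> = poly (smult (l^2) (M^2)) z"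
        using G_ident[OF SI cS t, where z=z] by (simp add: M_def I_def)
      finally show ?thesis .
    qed
    then have "M'^2 = smult (l^2) (M^2)" using poly_eq_poly_eq_iff by blast
    then have "(M' - smult l M) * (M' + smult l M) = 0"
      by (simp add: algebra_simps power2_eq_square smult_smult)
    then have "M' = smult l M \<or> M' = - smult l M"
      by (auto simp: eq_neg_iff_add_eq_0)
    then show ?thesis
    proof
      assume hM: "M' = smult l M"
      have "GP n a T t' + M' = smult l (GP n a S t + M)" by (simp add: hP hM smult_add_right)
      then have e1: "smult ((1 + complex_of_real (Re t')) / 2) (Fp a T) = smult (l * ((1 + complex_of_real (Re t)) / 2)) (Fp a S)"
        unfolding M_def M'_def GP_plus_GM[OF SI cS] GP_plus_GM[OF TI cT] by simp
      have TS: "T = S" by (rule Fp_inj[OF TI' SI' inj' fin _ e1]) (use ox in auto)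
      then have c1: "(1 + complex_of_real (Re t')) / 2 = l * ((1 + complex_of_real (Re t)) / 2)"
        using e1 smult_Fp_cancel by blast
      have "GP n a T t' - M' = smult l (GP n a S t - M)" by (simp add: hP hM smult_diff_right)
      then have "smult ((-1)^n * (1 - complex_of_real (Re t')) / 2) (Fp a (I - S)) = smult (l * ((-1)^n * (1 - complex_of_real (Re t)) / 2)) (Fp a (I - S))"
        unfolding M_def M'_def GP_minus_GM[OF SI cS] GP_minus_GM[OF TI cT] TS by (simp add: I_def)
      then have c2: "(-1)^n * (1 - complex_of_real (Re t')) / 2 = l * ((-1)^n * (1 - complex_of_real (Re t)) / 2)"
        using smult_Fp_cancel by blast
      have c2': "(1 - complex_of_real (Re t')) / 2 = l * ((1 - complex_of_real (Re t)) / 2)"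
      proof -
        have "(-1)^n * ((1 - complex_of_real (Re t')) / 2) = (-1)^n * (l * ((1 - complex_of_real (Re t)) / 2))"
          using c2 by (simp add: algebra_simps)
        then show ?thesis by simp
      qed
      have "l = 1"
      proof -
        have "(1::complex) = (1 + complex_of_real (Re t')) / 2 + (1 - complex_of_real (Re t')) / 2"
          by (simp add: field_simps)
        also have "\<dots> = l * ((1 + complex_of_real (Re t)) / 2) + l * ((1 - complex_of_real (Re t)) / 2)"
          by (simp only: c1 c2')
        also have "\<dots> = l" by (simp add: field_simps)
        finally show ?thesis by simp
      qed
      then have "Re t' = Re t" using c1 by simp
      moreover have "Im t' = Im t" using hGc \<open>l = 1\<close> by (simp add: Gc_def)
      ultimately have "t' = t" by (simp add: complex_eq_iff)
      then show ?thesis using TS by simp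
    next
      assume hM: "M' = - smult l M"
      have "GP n a T t' + M' = smult l (GP n a S t - M)" by (simp add: hP hM smult_diff_right)
      then have e1: "smult ((1 + complex_of_real (Re t')) / 2) (Fp a T) = smult (l * ((-1)^n * (1 - complex_of_real (Re t)) / 2)) (Fp a (I - S))"
        unfolding M_def M'_def GP_minus_GM[OF SI cS] GP_plus_GM[OF TI cT] by (simp add: I_def)
      have "T = I - S" by (rule Fp_inj[OF TI' _ inj' fin _ e1]) (use ox in auto)
      then show ?thesis by (simp add: I_def)
    qed
  qed
qed




lemma pderiv_root: "poly (pderiv ([:-a0, 1:] * u)) a0 = poly u (a0::complex)"
proof -
  have "pderiv ([:-a0, 1:] * u) = [:-a0, 1:] * pderiv u + u * pderiv [:-a0, 1:]"
    by (simp only: pderiv_mult)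
  also have "pderiv [:-a0, 1:] = [:1:]" by (simp add: pderiv_pCons)
  finally show ?thesis by simp
qed

lemma cnj_i_pow: "cnj (\<i>^n) = (-1)^n * \<i>^n"
proof -
  have "cnj (\<i>^n) = (- \<i>)^n" by simp
  also have "\<dots> = ((-1) * \<i>)^n" by simp
  finally show ?thesis by (simp only: power_mult_distrib)
qed

lemma completeness:
  assumes n: "n \<ge> 1" and inj: "inj_on a {1..2*n}"
    and hH: "is_hyp n H" and rH: "real_hyp n H" and eH: "evenly_tangent n a H" and cH: "snd H \<noteq> 0"
  shows "\<exists>S. S \<subseteq> {1..2*n} \<and> card S = n \<and> (\<exists>t\<in>sphere 0 1. proj_eq H (G n a S t))"
proof -
  define I where "I = {1..2*n}"
  have fin: "finite I" by (simp add: I_def)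
  have cI: "card I = 2 * n" by (simp add: I_def)
  have inj': "inj_on a I" using inj by (simp add: I_def)
  define f where "f = Fp a I"
  obtain h c where Hhc: "H = (h, c)" by (cases H)
  have c0: "c \<noteq> 0" using cH Hhc by simp
  have hz: "\<forall>k>n. h k = 0" using hH Hhc by (simp add: is_hyp_def)
  define P where "P = (\<Sum>k\<le>n. monom (h k) k)"
  have cP: "coeff P = h" unfolding P_def by (rule coeff_poly_of_fun(1)[OF hz])
  have dP: "degree P \<le> n" unfolding P_def by (rule coeff_poly_of_fun(2)[OF hz])
  have Heq: "H = (coeff P, c)" using Hhc cP by simp
  have LA': "LA n H = (\<lambda>z v. poly P z + c * v)" unfolding Heq by (rule LA_eq[OF dP])
  have SA: "SigmaA n a = (\<lambda>z v. v^2 - poly f z)" unfolding f_def I_def by (rule SigmaA_eq)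
  have ET: "\<And>z v. v^2 - poly f z = 0 \<Longrightarrow> poly P z + c * v = 0 \<Longrightarrow>
      \<exists>k\<ge>2. even k \<and> contact_order (\<lambda>z v. v^2 - poly f z) (\<lambda>z v. poly P z + c * v) (z, v) k"
    using eH unfolding evenly_tangent_def LA' SA by blast
  have rootf: "poly f (complex_of_real (a j)) = 0" if j: "j \<in> I" for j
    using Fp_root_iff[OF subset_refl inj' j fin] j by (simp add: f_def)
  have Pa: "poly P (complex_of_real (a j)) \<noteq> 0" if j: "j \<in> I" for j
  proof
    assume P0: "poly P (complex_of_real (a j)) = 0"
    have "0^2 - poly f (complex_of_real (a j)) = 0" using rootf[OF j] by simp
    from ET[OF this] P0 obtain k where k: "k \<ge> 2"
      and co: "contact_order (\<lambda>z v. v^2 - poly f z) (\<lambda>z v. poly P z + c * v) (complex_of_real (a j), 0) k"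
      by auto
    have "poly (pderiv f) (complex_of_real (a j)) = poly (Fp a (I - {j})) (complex_of_real (a j))"
      unfolding f_def Fp_split[OF fin j] by (rule pderiv_root)
    also have "\<dots> \<noteq> 0" using Fp_root_iff[of "I - {j}" I a j] fin inj' j by auto
    finally have "poly (pderiv f) (complex_of_real (a j)) \<noteq> 0" .
    then show False using no_tangent_branch[OF c0 rootf[OF j] _ co k] by blast
  qed
  define R where "R = P^2 - smult (c^2) f"
  have polyR: "poly R z = poly P z ^ 2 - c^2 * poly f z" for z by (simp add: R_def)
  have oneI: "1 \<in> I" using n by (simp add: I_def)
  have R0: "R \<noteq> 0"
  proof
    assume "R = 0"
    then have "poly R (complex_of_real (a 1)) = 0" by simp
    then show False using Pa[OF oneI] rootf[OF oneI] by (simp add: polyR)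
  qed
  have ev: "even (order z R)" for z
  proof (cases "poly R z = 0")
    case False then show ?thesis using order_0I[OF False] by simp
  next
    case True
    have fz: "poly f z \<noteq> 0"
    proof
      assume fz0: "poly f z = 0"
      then obtain j where j: "j \<in> I" "z = complex_of_real (a j)" using Fp_root_in[OF fin] by (auto simp: f_def)
      have "poly P z ^ 2 = 0" using True fz0 by (simp add: polyR)
      then have "poly P z = 0" by simp
      then show False using Pa[OF j(1)] j(2) by simp
    qed
    define v0 where "v0 = - poly P z / c"
    have Pz: "poly P z ^ 2 = c^2 * poly f z" using True by (simp add: polyR)
    have v0e: "v0^2 = poly f z" using Pz c0 by (simp add: v0_def power_divide)
    have v0nz: "v0 \<noteq> 0" using v0e fz by auto
    have L0: "poly P z + c * v0 = 0" using c0 by (simp add: v0_def)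
    obtain k where k: "k \<ge> 2" "even k"
      and co: "contact_order (\<lambda>z v. v^2 - poly f z) (\<lambda>z v. poly P z + c * v) (z, v0) k"
      using ET[of v0 z] v0e L0 by auto
    have "order z R = k" by (rule contact_order_eq_order[OF c0 v0nz v0e L0 co R_def R0])
    then show ?thesis using k by simp
  qed
  obtain e Q where e0: "e \<noteq> 0" and RQ: "R = smult e (Q^2)" using even_orders_square[OF R0 ev] by blast
  define \<mu> where "\<mu> = csqrt e"
  have \<mu>2: "\<mu>^2 = e" by (simp add: \<mu>_def)
  define A where "A = P - smult \<mu> Q"
  define B where "B = P + smult \<mu> Q"
  have AB: "A * B = smult (c^2) f"
  proof -
    have "A * B = P^2 - smult (\<mu>^2) (Q^2)"
      by (simp add: A_def B_def algebra_simps power2_eq_square smult_smult)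
    also have "\<dots> = P^2 - R" by (simp add: \<mu>2 RQ)
    also have "\<dots> = smult (c^2) f" by (simp add: R_def)
    finally show ?thesis .
  qed
  have Q0: "Q \<noteq> 0" using R0 RQ by auto
  have dR: "degree R \<le> 2 * n"
  proof -
    have "degree (P^2) \<le> 2 * n" using degree_power_le[of P 2] dP by (simp add: mult.commute)
    moreover have "degree (smult (c^2) f) \<le> 2 * n" using degree_Fp[OF fin, of a] cI
      by (simp add: f_def degree_smult_le order.trans[OF degree_smult_le])
    ultimately show ?thesis unfolding R_def using degree_diff_le by blast
  qed
  have "degree R = 2 * degree Q" using e0 Q0 by (simp add: RQ degree_power_eq)
  then have dQ: "degree Q \<le> n" using dR by simp
  have dA: "degree A \<le> n" unfolding A_def
    by (rule degree_diff_le[OF dP order.trans[OF degree_smult_le dQ]])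
  have dB: "degree B \<le> n" unfolding B_def
    by (rule degree_add_le[OF dP order.trans[OF degree_smult_le dQ]])
  have c20: "c^2 \<noteq> 0" using c0 by simp
  obtain S where SI: "S \<subseteq> I" and hA: "A = smult (lead_coeff A) (Fp a S)"
    and hB: "B = smult (lead_coeff B) (Fp a (I - S))"
    using factor_split[OF fin inj' AB[unfolded f_def] c20] by blast
  define \<alpha> where "\<alpha> = lead_coeff A"
  define \<beta> where "\<beta> = lead_coeff B"
  have AB0: "A * B \<noteq> 0" using AB c20 Fp_nz[of a I] by (simp add: f_def)
  have \<alpha>0: "\<alpha> \<noteq> 0" and \<beta>0: "\<beta> \<noteq> 0" using AB0 by (auto simp: \<alpha>_def \<beta>_def)
  have finS: "finite S" using SI fin finite_subset by blast
  have "degree A = card S" using hA \<alpha>0 degree_Fp[OF finS, of a] by (metis \<alpha>_def degree_smult_eq)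
  then have cS1: "card S \<le> n" using dA by simp
  have "degree B = card (I - S)" using hB \<beta>0 degree_Fp[of "I - S" a] fin by (metis \<beta>_def degree_smult_eq finite_Diff)
  then have "card (I - S) \<le> n" using dB by simp
  then have cS: "card S = n" using cI SI card_Diff_subset[OF finS SI] cS1 by simp
  have "smult (\<alpha> * \<beta>) f = smult (c^2) f"
  proof -
    have "A * B = smult (\<alpha> * \<beta>) (Fp a S * Fp a (I - S))"
      using hA hB by (metis \<alpha>_def \<beta>_def mult_smult_left mult_smult_right smult_smult)
    then show ?thesis using AB Fp_union[OF SI fin] by (simp add: f_def)
  qed
  then have abc: "\<alpha> * \<beta> = c^2" using smult_Fp_cancel unfolding f_def by blast
  have Pab: "P = smult (\<alpha>/2) (Fp a S) + smult (\<beta>/2) (Fp a (I - S))"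
  proof -
    have "A + B = smult 2 P"
      by (rule poly_eqI) (simp only: A_def B_def coeff_add coeff_diff coeff_smult, simp)
    then have "smult 2 P = smult \<alpha> (Fp a S) + smult \<beta> (Fp a (I - S))"
      using hA hB by (simp add: \<alpha>_def \<beta>_def)
    then have "smult (1/2) (smult 2 P) = smult (1/2) (smult \<alpha> (Fp a S) + smult \<beta> (Fp a (I - S)))" by simp
    then show ?thesis by (simp add: smult_add_right)
  qed
  obtain l where l0: "l \<noteq> 0" and lh: "\<And>k. cnj (h k) = l * h k" and lc: "(-1)^n * cnj c = l * c"
    using rH Hhc unfolding real_hyp_def by auto
  have cnjP: "cnj (poly P (complex_of_real r)) = l * poly P (complex_of_real r)" for r
  proof -
    have "cnj (poly P (complex_of_real r)) = (\<Sum>k\<le>n. cnj (h k) * complex_of_real r ^ k)"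
      by (simp add: poly_sum_n[OF dP] cP)
    also have "\<dots> = l * poly P (complex_of_real r)"
      by (simp add: poly_sum_n[OF dP] cP lh sum_distrib_left mult.assoc)
    finally show ?thesis .
  qed
  have Scne: "I - S \<noteq> {}"
  proof
    assume "I - S = {}"
    then have "card (I - S) = 0" by (simp only: card.empty)
    then show False using card_Diff_subset[OF finS SI] cI cS n by simp
  qed
  have Sne: "S \<noteq> {}" using cS n by auto
  have rS: "poly (Fp a S) (complex_of_real (a j)) = 0 \<longleftrightarrow> j \<in> S" if "j \<in> I" for j
    using Fp_root_iff[OF SI inj' that finS] .
  have rSc: "poly (Fp a (I - S)) (complex_of_real (a j)) = 0 \<longleftrightarrow> j \<notin> S" if "j \<in> I" for j
    using Fp_root_iff[of "I - S" I a j] inj' that fin by auto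
  have cnj\<alpha>: "cnj \<alpha> = l * \<alpha>"
  proof -
    obtain j where j: "j \<in> I - S" using Scne by blast
    define w where "w = poly (Fp a S) (complex_of_real (a j))"
    have w0: "w \<noteq> 0" using rS[of j] j by (simp add: w_def)
    have wr: "cnj w = w" by (simp add: w_def poly_Fp_real)
    have ePw: "poly P (complex_of_real (a j)) = \<alpha>/2 * w" using rSc[of j] j by (simp add: Pab w_def)
    have "cnj (\<alpha>/2 * w) = l * (\<alpha>/2 * w)" using cnjP[of "a j"] unfolding ePw .
    then have "cnj \<alpha> * w = (l * \<alpha>) * w" using wr by (simp add: field_simps)
    then show ?thesis using w0 by simp
  qed
  have cnj\<beta>: "cnj \<beta> = l * \<beta>"
  proof -
    obtain j where j: "j \<in> S" using Sne by blast
    have jI: "j \<in> I" using j SI by auto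
    define w where "w = poly (Fp a (I - S)) (complex_of_real (a j))"
    have w0: "w \<noteq> 0" using rSc[OF jI] j by (simp add: w_def)
    have wr: "cnj w = w" by (simp add: w_def poly_Fp_real)
    have ePw: "poly P (complex_of_real (a j)) = \<beta>/2 * w" using rS[OF jI] j by (simp add: Pab w_def)
    have "cnj (\<beta>/2 * w) = l * (\<beta>/2 * w)" using cnjP[of "a j"] unfolding ePw .
    then have "cnj \<beta> * w = (l * \<beta>) * w" using wr by (simp add: field_simps)
    then show ?thesis using w0 by simp
  qed
  have s2: "((-1)^n * (-1)^n :: complex) = 1" by (simp add: power_mult_distrib[symmetric])
  have cnjc: "cnj c = (-1)^n * l * c"
  proof -
    have "(-1)^n * ((-1)^n * cnj c) = (-1)^n * (l * c)" using lc by simp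
    then show ?thesis using s2 by (simp add: mult.assoc[symmetric])
  qed
  define \<tau> where "\<tau> = c / (\<i>^n * \<alpha>)"
  have in0: "\<i>^n \<noteq> (0::complex)" by simp
  have cnj\<tau>: "cnj \<tau> = \<tau>"
  proof -
    have "cnj \<tau> = cnj c / (cnj (\<i>^n) * cnj \<alpha>)"
      by (simp only: \<tau>_def complex_cnj_divide complex_cnj_mult)
    also have "\<dots> = ((-1)^n * l * c) / ((-1)^n * \<i>^n * (l * \<alpha>))"
      by (simp only: cnjc cnj_i_pow cnj\<alpha>)
    also have "\<dots> = \<tau>" using l0 \<alpha>0 by (simp add: \<tau>_def field_simps)
    finally show ?thesis .
  qed
  define r where "r = Re \<tau>"
  have \<tau>r: "\<tau> = complex_of_real r" using cnj\<tau> by (simp add: r_def complex_eq_iff)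
  have r0: "r \<noteq> 0"
  proof
    assume "r = 0"
    then have "c / (\<i>^n * \<alpha>) = 0" using \<tau>r by (simp add: \<tau>_def)
    then show False using c0 \<alpha>0 by simp
  qed
  have cr: "c = \<i>^n * \<alpha> * complex_of_real r" using \<tau>r \<alpha>0 by (simp add: \<tau>_def field_simps)
  have \<beta>r: "\<beta> = (-1)^n * complex_of_real r ^ 2 * \<alpha>"
  proof -
    have "\<alpha> * \<beta> = (\<i>^n)^2 * \<alpha>^2 * complex_of_real r ^ 2" using abc cr by (simp add: power_mult_distrib)
    moreover have "(\<i>^n)^2 = ((-1)^n :: complex)" by (rule i_pow_sq)
    ultimately have "\<alpha> * \<beta> = (-1)^n * \<alpha>^2 * complex_of_real r ^ 2" by simp
    then have "\<alpha> * \<beta> = \<alpha> * ((-1)^n * complex_of_real r ^ 2 * \<alpha>)" by (simp add: power2_eq_square algebra_simps)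
    then show ?thesis using \<alpha>0 by simp
  qed
  define x where "x = (1 - r^2) / (1 + r^2)"
  define y where "y = 2 * r / (1 + r^2)"
  define t where "t = Complex x y"
  have pos: "1 + r^2 > 0" by (simp add: add_pos_nonneg)
  have ts: "t \<in> sphere 0 1"
  proof -
    have d: "(1 + r^2)^2 \<noteq> 0" using pos by simp
    have num: "(1 - r^2)^2 + (2*r)^2 = (1 + r^2)^2" by (simp add: power2_eq_square algebra_simps)
    have "x^2 + y^2 = ((1 - r^2)^2 + (2*r)^2) / (1 + r^2)^2"
      by (simp add: x_def y_def power_divide add_divide_distrib)
    also have "\<dots> = 1" unfolding num using d by simp
    finally have "x^2 + y^2 = 1" .
    then show ?thesis by (simp add: t_def cmod_def)
  qed
  define D where "D = 1 + complex_of_real r ^ 2"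
  define m where "m = 1 / (\<alpha> * D)"
  have pos': "D \<noteq> 0"
    using pos unfolding D_def by (metis of_real_1 of_real_add of_real_eq_0_iff of_real_power less_irrefl)
  have m0: "m \<noteq> 0" using \<alpha>0 pos' by (simp add: m_def)
  have ox: "complex_of_real x = (2 - D) / D" by (simp add: x_def D_def)
  have oy: "complex_of_real y = 2 * complex_of_real r / D" by (simp add: y_def D_def)
  have \<beta>D: "\<beta> = (-1)^n * (D - 1) * \<alpha>" using \<beta>r by (simp add: D_def)
  have cx1: "(1 + complex_of_real x) / 4 = m * (\<alpha>/2)"
    using pos' \<alpha>0 by (simp add: ox m_def field_simps)
  have cx2: "(-1)^n * (1 - complex_of_real x) / 4 = m * (\<beta>/2)"
    using pos' \<alpha>0 by (simp add: ox m_def \<beta>D field_simps)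
  have cy: "Gc n t = m * c"
    using pos' \<alpha>0 by (simp add: Gc_def t_def oy m_def cr field_simps)
  have "proj_eq H (G n a S t)"
    unfolding proj_eq_def G_def Heq
  proof (intro exI[of _ m] conjI m0)
    show "fst (coeff (GP n a S t), Gc n t) = (\<lambda>k. m * fst (coeff P, c) k)"
    proof (rule ext)
      fix k
      have "coeff (GP n a S t) k = (1 + complex_of_real x) / 4 * coeff (Fp a S) k
          + (-1)^n * (1 - complex_of_real x) / 4 * coeff (Fp a (I - S)) k"
        by (simp add: GP_def t_def I_def)
      also have "\<dots> = m * coeff P k" unfolding cx1 cx2 by (simp add: Pab algebra_simps)
      finally show "fst (coeff (GP n a S t), Gc n t) k = m * fst (coeff P, c) k" by simp
    qed
    show "snd (coeff (GP n a S t), Gc n t) = m * snd (coeff P, c)" using cy by simp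
  qed
  moreover have "S \<subseteq> {1..2*n}" using SI by (simp add: I_def)
  ultimately show ?thesis using cS ts by blast
qed




definition rep :: "nat set set \<Rightarrow> nat set" where "rep D = (SOME S. S \<in> D)"

lemma div_rep:
  assumes "D \<in> divisions n"
  shows "rep D \<subseteq> {1..2*n} \<and> card (rep D) = n \<and> D = {rep D, {1..2*n} - rep D}"
proof -
  obtain S where S: "D = {S, {1..2*n} - S}" "S \<subseteq> {1..2*n}" "card S = n"
    using assms unfolding divisions_def by blast
  have "rep D \<in> D" unfolding rep_def using S(1) by (metis insertI1 someI)
  then have "rep D = S \<or> rep D = {1..2*n} - S" using S(1) by auto
  then show ?thesis
  proof
    assume "rep D = S" then show ?thesis using S by simp
  next
    assume r: "rep D = {1..2*n} - S"
    have "{1..2*n} - ({1..2*n} - S) = S" using S(2) by auto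
    then show ?thesis using r S card_compl[OF S(2,3)] by auto
  qed
qed

theorem proposition5p9:
  fixes n :: nat and a :: "nat \<Rightarrow> real"
  assumes "n \<ge> 2"
    and "\<forall>i j. 1 \<le> i \<and> i < j \<and> j \<le> 2*n \<longrightarrow> a i < a j"
  shows "\<exists>F :: nat set set \<Rightarrow> complex \<Rightarrow> hyp.
    (\<forall>D\<in>divisions n. \<forall>t\<in>sphere 0 1.
        is_hyp n (F D t) \<and> real_hyp n (F D t) \<and> evenly_tangent n a (F D t)) \<and>
    (\<forall>D\<in>divisions n. (\<forall>k. continuous_on (sphere 0 1) (\<lambda>t. fst (F D t) k)) \<and>
                      continuous_on (sphere 0 1) (\<lambda>t. snd (F D t))) \<and>
    (\<forall>D\<in>divisions n. \<forall>D'\<in>divisions n. \<forall>t\<in>sphere 0 1. \<forall>t'\<in>sphere 0 1.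
        proj_eq (F D t) (F D' t') \<longrightarrow> D = D' \<and> t = t') \<and>
    (\<forall>D\<in>divisions n. \<forall>S\<in>D. \<exists>t\<in>sphere 0 1. proj_eq (vertex_hyp n a S) (F D t)) \<and>
    (\<forall>H. is_hyp n H \<and> real_hyp n H \<and> evenly_tangent n a H \<and> snd H \<noteq> 0 \<longrightarrow>
        (\<exists>D\<in>divisions n. \<exists>t\<in>sphere 0 1. proj_eq H (F D t)))"
proof -
  define I where "I = {1..2*n}"
  have n1: "n \<ge> 1" using assms(1) by simp
  have inj: "inj_on a {1..2*n}"
  proof (rule inj_onI)
    fix i j assume i: "i \<in> {1..2*n}" and j: "j \<in> {1..2*n}" and e: "a i = a j"
    show "i = j"
    proof (rule ccontr)
      assume "i \<noteq> j"
      then consider "i < j" | "j < i" by linarith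
      then show False
      proof cases
        case 1 then have "a i < a j" using assms(2) i j by auto
        then show False using e by simp
      next
        case 2 then have "a j < a i" using assms(2) i j by auto
        then show False using e by simp
      qed
    qed
  qed
  define F where "F = (\<lambda>D t. G n a (rep D) t)"
  show ?thesis
  proof (intro exI[of _ F] conjI ballI allI impI)
    fix D t assume D: "D \<in> divisions n" and t: "t \<in> sphere (0::complex) 1"
    note r = div_rep[OF D]
    show "is_hyp n (F D t)" unfolding F_def using G_is_hyp[of "rep D" n t a] r t by blast
    show "real_hyp n (F D t)" unfolding F_def using G_real[of "rep D" n a t] r by blast
    show "evenly_tangent n a (F D t)" unfolding F_def using G_even[of "rep D" n a t] r n1 inj t by blast
  next
    fix D k assume D: "D \<in> divisions n"
    note r = div_rep[OF D]
    show "continuous_on (sphere 0 1) (\<lambda>t. fst (F D t) k)"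
      unfolding F_def using G_cont[of "rep D" n a] r by blast
  next
    fix D assume D: "D \<in> divisions n"
    note r = div_rep[OF D]
    show "continuous_on (sphere 0 1) (\<lambda>t. snd (F D t))"
      unfolding F_def using G_cont[of "rep D" n a] r by blast
  next
    fix D D' t t' assume D: "D \<in> divisions n" and D': "D' \<in> divisions n"
      and t: "t \<in> sphere (0::complex) 1" and t': "t' \<in> sphere (0::complex) 1"
      and pe: "proj_eq (F D t) (F D' t')"
    note r = div_rep[OF D] and r' = div_rep[OF D']
    have rD: "D = {rep D, {1..2*n} - rep D}" using conjunct2[OF conjunct2[OF r]] .
    have rD': "D' = {rep D', {1..2*n} - rep D'}" using conjunct2[OF conjunct2[OF r']] .
    have pe': "proj_eq (G n a (rep D) t) (G n a (rep D') t')" using pe unfolding F_def .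
    have "(rep D' = rep D \<and> t' = t) \<or> rep D' = {1..2*n} - rep D"
      using G_inj[OF conjunct1[OF r] conjunct1[OF conjunct2[OF r]] conjunct1[OF r'] conjunct1[OF conjunct2[OF r']] inj t t' pe'] .
    then have both: "D = D' \<and> t = t'"
    proof
      assume h: "rep D' = rep D \<and> t' = t"
      then have "D' = {rep D, {1..2*n} - rep D}" using rD' by simp
      then show ?thesis using rD h by simp
    next
      assume e: "rep D' = {1..2*n} - rep D"
      have dd: "{1..2*n} - ({1..2*n} - rep D) = rep D" using r by auto
      have "D' = {{1..2*n} - rep D, rep D}" using rD' e dd by simp
      then have "D' = D" using rD by (simp add: insert_commute)
      then have "rep D' = rep D" by simp
      then have "rep D = {}" using e by auto
      then have "card (rep D) = 0" by simp
      moreover have "card (rep D) = n" using conjunct1[OF conjunct2[OF r]] .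
      ultimately show ?thesis using n1 by simp
    qed
    show "D = D'" using both by simp
    show "t = t'" using both by simp
  next
    fix D S assume D: "D \<in> divisions n" and S: "S \<in> D"
    note r = div_rep[OF D]
    have "S = rep D \<or> S = {1..2*n} - rep D" using S r by auto
    then show "\<exists>t\<in>sphere 0 1. proj_eq (vertex_hyp n a S) (F D t)"
    proof
      assume "S = rep D"
      then show ?thesis unfolding F_def using G_vertex1[of "rep D" n a] r
        by (intro bexI[of _ 1]) auto
    next
      assume "S = {1..2*n} - rep D"
      then show ?thesis unfolding F_def using G_vertex2[of "rep D" n a] r
        by (intro bexI[of _ "-1"]) auto
    qed
  next
    fix H assume H: "is_hyp n H \<and> real_hyp n H \<and> evenly_tangent n a H \<and> snd H \<noteq> 0"
    obtain S t where S: "S \<subseteq> {1..2*n}" "card S = n" and t: "t \<in> sphere 0 1"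
      and pe: "proj_eq H (G n a S t)"
      using completeness[OF n1 inj] H by blast
    define D where "D = {S, {1..2*n} - S}"
    have D: "D \<in> divisions n" unfolding D_def divisions_def using S by blast
    note r = div_rep[OF D]
    have "rep D \<in> D" using r by auto
    then have "rep D = S \<or> rep D = {1..2*n} - S" by (auto simp: D_def)
    then show "\<exists>D\<in>divisions n. \<exists>t\<in>sphere 0 1. proj_eq H (F D t)"
    proof
      assume "rep D = S"
      then have "proj_eq H (F D t)" using pe unfolding F_def by simp
      then show ?thesis using D t by blast
    next
      assume e: "rep D = {1..2*n} - S"
      have dd: "{1..2*n} - ({1..2*n} - S) = S" using S by auto
      have sw: "proj_eq (G n a ({1..2*n} - S) (sigma n t)) (G n a S t)"
        using G_swap[of "{1..2*n} - S" n a t] dd by simp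
      have "proj_eq H (G n a ({1..2*n} - S) (sigma n t))"
        by (rule proj_eq_trans[OF pe proj_eq_sym[OF sw]])
      then have "proj_eq H (F D (sigma n t))" using e unfolding F_def by simp
      then show ?thesis using D sigma_sphere[OF t] by blast
    qed
  qed
qed


end
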